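(* Let $\Omega\subseteq\mathbb{R}^d$ be a convex open set and $f:\Omega\to\mathbb{R}$ a $\lambda$-convex function for some $\lambda\le0$. There exists a constant $C\ge0$ depending only on $d$ such that \[\int_\Omega\sup_{y\in B_r(x)\cap\Omega}\big|f(y)-(f(x)+\nabla f(x)\cdot(y-x))\big|\,\mathrm{d}x\le C\,r^2\,\mathscr{H}^{d-1}(\partial\Omega)\big([f]_{\mathscr{C}^{0,1}(\Omega)}+|\lambda|\operatorname{diam}(\Omega)\big)\] for every $r>0$.
   Context: $f$ is $\lambda$-convex if $x\mapsto f(x)-\lambda|x|^2/2$ is convex; such $f$ is differentiable Lebesgue-a.e. on $\Omega$, and the integrand is defined at such points. $[f]_{\mathscr{C}^{0,1}(\Omega)}\in[0,\infty]$ is the Lipschitz constant of $f$ on $\Omega$, $B_r(x)$ the open Euclidean ball, and $\mathscr{H}^{d-1}$ the $(d-1)$-dimensional Hausdorff measure. *)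

theory Defs
  imports "HOL-Analysis.Analysis"
begin

definition lambda_convex_on :: "real \<Rightarrow> 'a::real_inner set \<Rightarrow> ('a \<Rightarrow> real) \<Rightarrow> bool" where
  "lambda_convex_on lam S f \<longleftrightarrow> convex_on S (\<lambda>x. f x - lam * (norm x)\<^sup>2 / 2)"

text \<open>Lipschitz constant [f]_{C^{0,1}(S)} in [0,\<infinity>] (0 if S has at most one point).\<close>
definition lip_const :: "'a::metric_space set \<Rightarrow> ('a \<Rightarrow> real) \<Rightarrow> ennreal" where
  "lip_const S f = (SUP p\<in>{p. fst p \<in> S \<and> snd p \<in> S \<and> fst p \<noteq> snd p}. ennreal (\<bar>f (fst p) - f (snd p)\<bar> / dist (fst p) (snd p)))"

definition ediam :: "'a::metric_space set \<Rightarrow> ennreal" where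
  "ediam S = (if bounded S then ennreal (diameter S) else top)"

definition hausdorff_const :: "nat \<Rightarrow> real" where
  "hausdorff_const s = pi powr (real s / 2) / Gamma (real s / 2 + 1)"

definition hcost :: "nat \<Rightarrow> 'a::metric_space set \<Rightarrow> ennreal" where
  "hcost s E = (if E = {} then 0 else ennreal (hausdorff_const s * (diameter E / 2) ^ s))"

definition hausdorff_pre :: "nat \<Rightarrow> real \<Rightarrow> 'a::metric_space set \<Rightarrow> ennreal" where
  "hausdorff_pre s \<delta> A = (INF E\<in>{E :: nat \<Rightarrow> 'a set. A \<subseteq> (\<Union>i. E i) \<and>
        (\<forall>i. bounded (E i) \<and> diameter (E i) \<le> \<delta>)}. (\<Sum>i. hcost s (E i)))"

definition hausdorff_measure :: "nat \<Rightarrow> 'a::metric_space set \<Rightarrow> ennreal" where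
  "hausdorff_measure s A = (SUP \<delta>\<in>{0<..}. hausdorff_pre s \<delta> A)"

end

theory Submission
  imports Defs "HOL-Library.Nat_Bijection"
begin


lemma slope3:
  fixes f :: "real \<Rightarrow> real"
  assumes f: "convex_on I f" and I: "a \<in> I" "c \<in> I" and "a < b" "b < c"
  shows "(f b - f a) / (b - a) \<le> (f c - f a) / (c - a)"
    and "(f c - f a) / (c - a) \<le> (f c - f b) / (c - b)"
proof -
  have "(f a - f b) / (a - b) \<le> (f a - f c) / (a - c)"
   and "(f a - f c) / (a - c) \<le> (f b - f c) / (b - c)"
    using convex_on_slope_le[OF f I assms(4,5)] by auto
  moreover have "(f a - f b) / (a - b) = (f b - f a) / (b - a)"
    by (simp add: divide_simps) (simp add: algebra_simps)
  moreover have "(f a - f c) / (a - c) = (f c - f a) / (c - a)"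
    by (simp add: divide_simps) (simp add: algebra_simps)
  moreover have "(f b - f c) / (b - c) = (f c - f b) / (c - b)"
    by (simp add: divide_simps) (simp add: algebra_simps)
  ultimately show "(f b - f a) / (b - a) \<le> (f c - f a) / (c - a)"
    and "(f c - f a) / (c - a) \<le> (f c - f b) / (c - b)" by auto
qed

lemma real_convex_between:
  fixes I :: "real set"
  assumes "convex I" "a \<in> I" "d \<in> I" "a \<le> b" "b \<le> d"
  shows "b \<in> I"
proof -
  have "closed_segment a d \<subseteq> I" using assms convex_contains_segment by blast
  moreover have "b \<in> closed_segment a d" using assms by (simp add: closed_segment_eq_real_ivl)
  ultimately show ?thesis by blast
qed

lemma slope_mono:
  fixes f :: "real \<Rightarrow> real"
  assumes f: "convex_on I f" and I: "a \<in> I" "d \<in> I" and "a < b" "c < d" "a \<le> c" "b \<le> d"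
  shows "(f b - f a) / (b - a) \<le> (f d - f c) / (d - c)"
proof -
  have cI: "convex I" using f convex_on_imp_convex by blast
  have 1: "(f b - f a) / (b - a) \<le> (f d - f a) / (d - a)"
  proof (cases "b = d")
    case False then show ?thesis using slope3(1)[OF f I(1) I(2), of b] assms by auto
  qed simp
  have 2: "(f d - f a) / (d - a) \<le> (f d - f c) / (d - c)"
  proof (cases "a = c")
    case False then show ?thesis using slope3(2)[OF f I(1) I(2), of c] assms by auto
  qed simp
  show ?thesis using 1 2 by linarith
qed

lemma line_comb_eq:
  fixes x v :: "'a::real_vector"
  assumes "u + w = (1::real)"
  shows "u *\<^sub>R (x + t1 *\<^sub>R v) + w *\<^sub>R (x + t2 *\<^sub>R v) = x + (u * t1 + w * t2) *\<^sub>R v"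
proof -
  have "u *\<^sub>R (x + t1 *\<^sub>R v) + w *\<^sub>R (x + t2 *\<^sub>R v) = (u + w) *\<^sub>R x + (u * t1 + w * t2) *\<^sub>R v"
    by (simp add: algebra_simps)
  then show ?thesis using assms by simp
qed

lemma convex_on_line:
  assumes "convex_on S g"
  shows "convex_on {t. x + t *\<^sub>R v \<in> S} (\<lambda>t. g (x + t *\<^sub>R v))"
proof -
  have cS: "convex S" using assms convex_on_imp_convex by blast
  have eq: "u *\<^sub>R (x + t1 *\<^sub>R v) + w *\<^sub>R (x + t2 *\<^sub>R v) = x + (u * t1 + w * t2) *\<^sub>R v"
    if "u + w = 1" for u w t1 t2 :: real
    using line_comb_eq[OF that] .
  show ?thesis unfolding convex_on_def
  proof (intro conjI ballI allI impI)
    show "convex {t. x + t *\<^sub>R v \<in> S}"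
      unfolding convex_def
    proof (intro ballI allI impI, clarsimp)
      fix t1 t2 u w :: real assume h: "x + t1 *\<^sub>R v \<in> S" "x + t2 *\<^sub>R v \<in> S" "0 \<le> u" "0 \<le> w" "u + w = 1"
      have "u *\<^sub>R (x + t1 *\<^sub>R v) + w *\<^sub>R (x + t2 *\<^sub>R v) \<in> S"
        using cS h unfolding convex_def by blast
      then show "x + (u * t1 + w * t2) *\<^sub>R v \<in> S" using eq[OF h(5)] by simp
    qed
  next
    fix t1 t2 u w :: real assume h: "t1 \<in> {t. x + t *\<^sub>R v \<in> S}" "t2 \<in> {t. x + t *\<^sub>R v \<in> S}" "0 \<le> u" "0 \<le> w" "u + w = 1"
    have "g (u *\<^sub>R (x + t1 *\<^sub>R v) + w *\<^sub>R (x + t2 *\<^sub>R v)) \<le> u * g (x + t1 *\<^sub>R v) + w * g (x + t2 *\<^sub>R v)"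
      using assms h unfolding convex_on_def by auto
    then show "g (x + (u *\<^sub>R t1 + w *\<^sub>R t2) *\<^sub>R v) \<le> u * g (x + t1 *\<^sub>R v) + w * g (x + t2 *\<^sub>R v)"
      using eq[OF h(5)] by simp
  qed
qed

lemma oneD_est:
  fixes \<phi> :: "real \<Rightarrow> real"
  assumes cv: "convex_on I \<phi>" and R: "R > 0" and sub: "{-2*R..2*R} \<subseteq> I"
    and sg: "\<And>s. s \<in> I \<Longrightarrow> \<phi> s \<ge> \<phi> 0 + c * s" and t: "\<bar>t\<bar> \<le> R"
  shows "\<phi> t - \<phi> 0 - c * t \<le> \<phi> (2*R) - \<phi> R - \<phi> (-R) + \<phi> (-2*R)"
    and "0 \<le> \<phi> (2*R) - \<phi> R - \<phi> (-R) + \<phi> (-2*R)"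
proof -
  have mem: "s \<in> I" if "-2*R \<le> s" "s \<le> 2*R" for s using sub that by auto
  define sp where "sp = (\<phi> (2*R) - \<phi> R) / (2*R - R)"
  define sm where "sm = (\<phi> (-R) - \<phi> (-2*R)) / (-R - (-2*R))"
  have spm: "sm \<le> sp" unfolding sp_def sm_def
    by (rule slope_mono[OF cv]) (use R mem in auto)
  have G: "\<phi> (2*R) - \<phi> R - \<phi> (-R) + \<phi> (-2*R) = R * (sp - sm)"
    unfolding sp_def sm_def using R by (simp add: field_simps)
  show "0 \<le> \<phi> (2*R) - \<phi> R - \<phi> (-R) + \<phi> (-2*R)" using G spm R by simp
  have c1: "c \<ge> sm"
  proof -
    have "\<phi> (-R) \<ge> \<phi> 0 - c * R" using sg[of "-R"] mem R by auto
    hence "c \<ge> (\<phi> 0 - \<phi> (-R)) / (0 - (-R))" using R by (simp add: field_simps)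
    moreover have "sm \<le> (\<phi> 0 - \<phi> (-R)) / (0 - (-R))" unfolding sm_def
      by (rule slope_mono[OF cv]) (use R mem in auto)
    ultimately show ?thesis by linarith
  qed
  have c2: "c \<le> sp"
  proof -
    have "\<phi> R \<ge> \<phi> 0 + c * R" using sg[of "R"] mem R by auto
    hence "c \<le> (\<phi> R - \<phi> 0) / (R - 0)" using R by (simp add: field_simps)
    moreover have "(\<phi> R - \<phi> 0) / (R - 0) \<le> sp" unfolding sp_def
      by (rule slope_mono[OF cv]) (use R mem in auto)
    ultimately show ?thesis by linarith
  qed
  consider "t > 0" | "t = 0" | "t < 0" by linarith
  then show "\<phi> t - \<phi> 0 - c * t \<le> \<phi> (2*R) - \<phi> R - \<phi> (-R) + \<phi> (-2*R)"
  proof cases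
    case 1
    have "(\<phi> t - \<phi> 0) / (t - 0) \<le> sp" unfolding sp_def
      by (rule slope_mono[OF cv]) (use R mem t 1 in auto)
    hence "\<phi> t - \<phi> 0 \<le> t * sp" using 1 by (simp add: field_simps)
    moreover have "c * t \<ge> sm * t" using c1 1 by (intro mult_right_mono) auto
    ultimately have "\<phi> t - \<phi> 0 - c * t \<le> t * (sp - sm)" by (simp add: algebra_simps)
    also have "\<dots> \<le> R * (sp - sm)" using t 1 spm by (intro mult_right_mono) auto
    finally show ?thesis using G by simp
  next
    case 2 then show ?thesis using G spm R by simp
  next
    case 3
    have "sm \<le> (\<phi> 0 - \<phi> t) / (0 - t)" unfolding sm_def
      by (rule slope_mono[OF cv]) (use R mem t 3 in auto)
    hence "\<phi> t - \<phi> 0 \<le> t * sm" using 3 by (simp add: field_simps)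
    moreover have "c * (-t) \<le> sp * (-t)" using c2 3 by (intro mult_right_mono) auto
    ultimately have "\<phi> t - \<phi> 0 - c * t \<le> (-t) * (sp - sm)" by (simp add: algebra_simps)
    also have "\<dots> \<le> R * (sp - sm)" using t 3 spm by (intro mult_right_mono) auto
    finally show ?thesis using G by simp
  qed
qed


lemma nn_integral_translate:
  fixes f :: "'a::euclidean_space \<Rightarrow> ennreal"
  assumes [measurable]: "f \<in> borel_measurable borel"
  shows "(\<integral>\<^sup>+x. f (x + c) \<partial>lborel) = (\<integral>\<^sup>+x. f x \<partial>lborel)"
proof -
  have "(\<integral>\<^sup>+x. f x \<partial>lborel) = (\<integral>\<^sup>+x. f x \<partial>(distr lborel borel ((+) c)))"
    by (simp add: lborel_distr_plus)
  also have "\<dots> = (\<integral>\<^sup>+x. f (c + x) \<partial>lborel)"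
    by (subst nn_integral_distr) auto
  finally show ?thesis by (simp add: add.commute)
qed

definition slab :: "'a::euclidean_space \<Rightarrow> real \<Rightarrow> 'a set" where
  "slab e s = {z. 0 \<le> z \<bullet> e \<and> z \<bullet> e < s}"

lemma slab_borel[measurable]: "slab e s \<in> sets borel"
  unfolding slab_def by measurable

lemma tiling:
  fixes u :: "'a::euclidean_space \<Rightarrow> ennreal"
  assumes [measurable]: "u \<in> borel_measurable borel" and e: "norm e = 1" and s: "s > 0"
  shows "(\<integral>\<^sup>+x. u x \<partial>lborel) =
    (\<integral>\<^sup>+z. (\<Sum>n. u (z + (real_of_int (int_decode n) * s) *\<^sub>R e)) * indicator (slab e s) z \<partial>lborel)"
proof -
  define c where "c n = real_of_int (int_decode n) * s" for n
  define B where "B n = {z::'a. c n \<le> z \<bullet> e \<and> z \<bullet> e < c n + s}" for n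
  have ee: "e \<bullet> e = 1" using e by (simp add: norm_eq_1)
  have Bm[measurable]: "B n \<in> sets borel" for n unfolding B_def by measurable
  have fl: "int_decode n = \<lfloor>z \<bullet> e / s\<rfloor>" if "z \<in> B n" for z n
  proof -
    have "real_of_int (int_decode n) \<le> z \<bullet> e / s" "z \<bullet> e / s < real_of_int (int_decode n) + 1"
      using that s unfolding B_def c_def by (auto simp: field_simps)
    then show ?thesis by linarith
  qed
  have disj: "disjoint_family B"
    unfolding disjoint_family_on_def
  proof (intro ballI impI)
    fix n m :: nat assume "n \<noteq> m"
    show "B n \<inter> B m = {}"
    proof (rule ccontr)
      assume "B n \<inter> B m \<noteq> {}"
      then obtain z where "z \<in> B n" "z \<in> B m" by blast
      then have "int_decode n = int_decode m" using fl by simp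
      then show False using \<open>n \<noteq> m\<close> by (simp add: int_decode_eq)
    qed
  qed
  have un: "(\<Union>n. B n) = UNIV"
  proof (intro set_eqI iffI)
    fix z :: 'a
    define k where "k = \<lfloor>z \<bullet> e / s\<rfloor>"
    have "real_of_int k \<le> z \<bullet> e / s" "z \<bullet> e / s < real_of_int k + 1" unfolding k_def by linarith+
    then have "z \<in> B (int_encode k)" unfolding B_def c_def using s by (auto simp: field_simps)
    then show "z \<in> (\<Union>n. B n)" by blast
  qed auto
  have "(\<integral>\<^sup>+x. u x \<partial>lborel) = (\<integral>\<^sup>+x \<in> (\<Union>n. B n). u x \<partial>lborel)" by (simp add: un)
  also have "\<dots> = (\<Sum>n. (\<integral>\<^sup>+x \<in> B n. u x \<partial>lborel))"
    by (rule nn_integral_disjoint_family) (use disj in auto)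
  also have "\<dots> = (\<Sum>n. (\<integral>\<^sup>+z. u (z + c n *\<^sub>R e) * indicator (slab e s) z \<partial>lborel))"
  proof (intro suminf_cong)
    fix n
    have "(\<integral>\<^sup>+x \<in> B n. u x \<partial>lborel) = (\<integral>\<^sup>+z. u (z + c n *\<^sub>R e) * indicator (B n) (z + c n *\<^sub>R e) \<partial>lborel)"
      by (rule nn_integral_translate[symmetric]) measurable
    also have "\<dots> = (\<integral>\<^sup>+z. u (z + c n *\<^sub>R e) * indicator (slab e s) z \<partial>lborel)"
      by (intro nn_integral_cong) (auto simp: indicator_def B_def slab_def inner_add_left ee)
    finally show "(\<integral>\<^sup>+x \<in> B n. u x \<partial>lborel) = (\<integral>\<^sup>+z. u (z + c n *\<^sub>R e) * indicator (slab e s) z \<partial>lborel)" .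
  qed
  also have "\<dots> = (\<integral>\<^sup>+z. (\<Sum>n. u (z + c n *\<^sub>R e) * indicator (slab e s) z) \<partial>lborel)"
    by (rule nn_integral_suminf[symmetric]) measurable
  also have "\<dots> = (\<integral>\<^sup>+z. (\<Sum>n. u (z + c n *\<^sub>R e)) * indicator (slab e s) z \<partial>lborel)"
    by simp
  finally show ?thesis unfolding c_def .
qed

lemma suminf_int_decode_le:
  fixes f :: "int \<Rightarrow> ennreal"
  assumes "\<And>F. finite F \<Longrightarrow> sum f F \<le> B"
  shows "(\<Sum>n. f (int_decode n)) \<le> B"
proof (rule suminf_le_const)
  show "summable (\<lambda>n. f (int_decode n))" by simp
  fix N
  have "sum (\<lambda>n. f (int_decode n)) {..<N} = sum f (int_decode ` {..<N})"
    by (simp add: sum.reindex inj_int_decode)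
  also have "\<dots> \<le> B" by (rule assms) simp
  finally show "sum (\<lambda>n. f (int_decode n)) {..<N} \<le> B" .
qed


lemma emeasure_cball_le:
  fixes c :: "'a::euclidean_space"
  assumes "r \<ge> 0"
  shows "emeasure lborel (cball c r) \<le> ennreal ((2 * r) ^ DIM('a))"
proof -
  have "cball c r \<subseteq> cbox (c - r *\<^sub>R One) (c + r *\<^sub>R One)"
  proof
    fix y assume "y \<in> cball c r"
    then have "norm (y - c) \<le> r" by (simp add: dist_norm norm_minus_commute)
    then have "\<bar>(y - c) \<bullet> b\<bar> \<le> r" if "b \<in> Basis" for b
      using Basis_le_norm[OF that, of "y - c"] by linarith
    then show "y \<in> cbox (c - r *\<^sub>R One) (c + r *\<^sub>R One)"
      by (auto simp: mem_box inner_diff_left inner_add_left abs_le_iff algebra_simps)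
  qed
  then have "emeasure lborel (cball c r) \<le> emeasure lborel (cbox (c - r *\<^sub>R One) (c + r *\<^sub>R One))"
    by (intro emeasure_mono) auto
  also have "\<dots> = ennreal ((2 * r) ^ DIM('a))"
    using assms by (simp add: emeasure_lborel_cbox_eq inner_diff_left inner_add_left algebra_simps)
  finally show ?thesis .
qed

lemma hausdorff_const_pos: "hausdorff_const s > 0"
  unfolding hausdorff_const_def by (intro divide_pos_pos) auto

definition Kc :: "nat \<Rightarrow> real" where
  "Kc d = 2 * 6 ^ d * 2 ^ (d - 1) / hausdorff_const (d - 1)"

lemma Kc_pos: "Kc d > 0"
  unfolding Kc_def using hausdorff_const_pos by (intro divide_pos_pos) auto

lemma sweep_piece:
  fixes p :: "'a::euclidean_space"
  assumes e: "norm e = 1" and R: "R > 0" and \<rho>: "0 < \<rho>" "\<rho> \<le> R"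
  defines "N \<equiv> nat \<lfloor>R / \<rho>\<rfloor>"
  shows "emeasure lborel (\<Union>k\<in>{..N}. cball (p + (real k * \<rho> - p \<bullet> e) *\<^sub>R e) (3 * \<rho>))
          \<le> ennreal (2 * 6 ^ DIM('a) * R * \<rho> ^ (DIM('a) - 1))"
proof -
  let ?d = "DIM('a)"
  have "emeasure lborel (\<Union>k\<in>{..N}. cball (p + (real k * \<rho> - p \<bullet> e) *\<^sub>R e) (3 * \<rho>))
      \<le> (\<Sum>k\<in>{..N}. emeasure lborel (cball (p + (real k * \<rho> - p \<bullet> e) *\<^sub>R e) (3 * \<rho>)))"
    by (intro emeasure_subadditive_finite) auto
  also have "\<dots> \<le> (\<Sum>k\<in>{..N}. ennreal ((2 * (3 * \<rho>)) ^ ?d))"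
    by (intro sum_mono emeasure_cball_le) (use \<rho> in auto)
  also have "\<dots> = ennreal (real (N + 1) * (6 * \<rho>) ^ ?d)"
    using \<rho> by (simp add: ennreal_of_nat_eq_real_of_nat ennreal_mult)
  also have "\<dots> \<le> ennreal (2 * 6 ^ ?d * R * \<rho> ^ (?d - 1))"
  proof (rule ennreal_leI)
    have N: "real N \<le> R / \<rho>" unfolding N_def using R \<rho> by simp
    have 1: "1 \<le> R / \<rho>" using \<rho> by simp
    have "real (N + 1) \<le> 2 * (R / \<rho>)" using N 1 by simp
    have eq: "(6 * \<rho>) ^ ?d = 6 ^ ?d * \<rho> * \<rho> ^ (?d - 1)"
    proof -
      have "?d = Suc (?d - 1)" using DIM_positive[where 'a='a] by linarith
      then have "\<rho> ^ ?d = \<rho> * \<rho> ^ (?d - 1)" by (metis power_Suc)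
      then show ?thesis by (simp add: power_mult_distrib)
    qed
    have "real (N + 1) * (6 * \<rho>) ^ ?d = real (N + 1) * (6 ^ ?d * \<rho> * \<rho> ^ (?d - 1))"
      using eq by simp
    also have "\<dots> \<le> 2 * (R / \<rho>) * (6 ^ ?d * \<rho> * \<rho> ^ (?d - 1))"
      by (rule mult_right_mono[OF \<open>real (N + 1) \<le> 2 * (R / \<rho>)\<close>]) (use \<rho> in simp)
    also have "\<dots> = 2 * 6 ^ ?d * R * \<rho> ^ (?d - 1)" using \<rho> by (simp add: field_simps)
    finally show "real (N + 1) * (6 * \<rho>) ^ ?d \<le> 2 * 6 ^ ?d * R * \<rho> ^ (?d - 1)" .
  qed
  finally show ?thesis .
qed

lemma sweep_cover:
  fixes p q z :: "'a::euclidean_space"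
  assumes e: "norm e = 1" and \<rho>: "0 < \<rho>" "\<rho> \<le> R" and pq: "dist p q \<le> \<rho>"
    and z: "z = q + t *\<^sub>R e" and zs: "z \<in> slab e R"
  shows "z \<in> (\<Union>k\<in>{..nat \<lfloor>R / \<rho>\<rfloor>}. cball (p + (real k * \<rho> - p \<bullet> e) *\<^sub>R e) (3 * \<rho>))"
proof -
  have ee: "e \<bullet> e = 1" using e by (simp add: norm_eq_1)
  define \<tau> where "\<tau> = z \<bullet> e"
  have \<tau>: "0 \<le> \<tau>" "\<tau> < R" using zs unfolding slab_def \<tau>_def by auto
  define k where "k = nat \<lfloor>\<tau> / \<rho>\<rfloor>"
  have fl: "real_of_int \<lfloor>\<tau> / \<rho>\<rfloor> \<le> \<tau> / \<rho>" "\<tau> / \<rho> < real_of_int \<lfloor>\<tau> / \<rho>\<rfloor> + 1" by linarith+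
  have fl0: "0 \<le> \<lfloor>\<tau> / \<rho>\<rfloor>" using \<tau> \<rho> by simp
  have kN: "k \<le> nat \<lfloor>R / \<rho>\<rfloor>" unfolding k_def using \<tau> \<rho>
    by (intro nat_mono floor_mono) (simp add: divide_right_mono)
  have kr: "real k = real_of_int \<lfloor>\<tau> / \<rho>\<rfloor>" unfolding k_def using fl0 by simp
  have tk: "\<bar>\<tau> - real k * \<rho>\<bar> \<le> \<rho>"
  proof -
    have "real k \<le> \<tau> / \<rho>" using fl(1) kr by simp
    then have "real k * \<rho> \<le> \<tau>" using \<rho> by (simp add: le_divide_eq)
    moreover have "\<tau> / \<rho> < real k + 1" using fl(2) kr by simp
    then have "\<tau> < (real k + 1) * \<rho>" using \<rho> by (simp add: divide_less_eq)
    then have "\<tau> < real k * \<rho> + \<rho>" by (simp add: algebra_simps)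
    ultimately show ?thesis by linarith
  qed
  define c where "c = p + (real k * \<rho> - p \<bullet> e) *\<^sub>R e"
  have "z - c = (q - p) + ((\<tau> - real k * \<rho>) - (q - p) \<bullet> e) *\<^sub>R e"
    unfolding c_def \<tau>_def z by (simp add: algebra_simps inner_add_left inner_diff_left ee)
  then have "norm (z - c) \<le> norm (q - p) + \<bar>(\<tau> - real k * \<rho>) - (q - p) \<bullet> e\<bar>"
    using e by (metis norm_scaleR norm_triangle_ineq mult.right_neutral)
  also have "\<dots> \<le> norm (q - p) + \<bar>\<tau> - real k * \<rho>\<bar> + \<bar>(q - p) \<bullet> e\<bar>" by linarith
  also have "\<bar>(q - p) \<bullet> e\<bar> \<le> norm (q - p)" using Cauchy_Schwarz_ineq2[of "q - p" e] e by simp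
  finally have "norm (z - c) \<le> 3 * \<rho>" using tk pq by (simp add: dist_norm norm_minus_commute)
  then have "z \<in> cball c (3 * \<rho>)" by (simp add: dist_norm norm_minus_commute)
  then show ?thesis using kN unfolding c_def by blast
qed


lemma ennreal_lt_add_pos: "a \<noteq> top \<Longrightarrow> 0 < e \<Longrightarrow> a < a + ennreal e"
  by (cases a) (auto simp: ennreal_plus[symmetric] ennreal_less_iff simp del: ennreal_plus)

lemma shadow:
  fixes F S :: "'a::euclidean_space set"
  assumes e: "norm e = 1" and R: "R > 0" and Sm: "S \<in> sets borel"
    and sub: "\<And>z. z \<in> S \<Longrightarrow> \<exists>p\<in>F. \<exists>t. z = p + t *\<^sub>R e"
  shows "emeasure lborel (slab e R \<inter> S) \<le> ennreal (Kc DIM('a) * R) * hausdorff_measure (DIM('a) - 1) F"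
proof -
  let ?d = "DIM('a)"
  let ?H = "hausdorff_measure (?d - 1) F"
  define B :: real where "B = 2 * 6 ^ ?d"
  define \<omega> where "\<omega> = hausdorff_const (?d - 1)"
  have \<omega>: "\<omega> > 0" unfolding \<omega>_def by (rule hausdorff_const_pos)
  have B: "B > 0" unfolding B_def by simp
  have K: "Kc ?d * \<omega> = B * 2 ^ (?d - 1)" unfolding Kc_def B_def \<omega>_def using \<omega> \<omega>_def by simp
  have KR: "Kc ?d * R > 0" using Kc_pos R by simp
  show ?thesis
  proof (cases "?H = top")
    case True then show ?thesis using KR Kc_pos[of ?d] R by (simp add: ennreal_mult_top)
  next
    case False
    show ?thesis
    proof (rule ennreal_le_epsilon)
      fix \<epsilon>0 :: real assume \<epsilon>0: "0 < \<epsilon>0"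
      define \<epsilon> where "\<epsilon> = \<epsilon>0 / (Kc ?d * R + 2 * B * R)"
      have den: "Kc ?d * R + 2 * B * R > 0" using KR B R by (intro add_pos_pos mult_pos_pos) (auto simp: Kc_pos)
      have \<epsilon>: "\<epsilon> > 0" unfolding \<epsilon>_def using den \<epsilon>0 by simp
      have \<epsilon>eq: "(Kc ?d * R + 2 * B * R) * \<epsilon> = \<epsilon>0" unfolding \<epsilon>_def using den by simp
      have pre: "hausdorff_pre (?d - 1) R F \<le> ?H"
        unfolding hausdorff_measure_def by (rule SUP_upper) (use R in simp)
      have "hausdorff_pre (?d - 1) R F < ?H + ennreal \<epsilon>"
        by (rule le_less_trans[OF pre ennreal_lt_add_pos[OF False \<epsilon>]])
      then obtain E where E: "F \<subseteq> (\<Union>i. E i)" "\<And>i. bounded (E i)" "\<And>i. diameter (E i) \<le> R"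
        and Es: "(\<Sum>i. hcost (?d - 1) (E i)) < ?H + ennreal \<epsilon>"
        unfolding hausdorff_pre_def INF_less_iff by auto
      define D where "D i = diameter (E i)" for i
      define \<eta> where "\<eta> i = (if ?d = 1 then R else min R ((\<epsilon> * (1/2)^i) powr (1 / real (?d - 1))))" for i
      define \<rho> where "\<rho> i = max (D i) (\<eta> i)" for i
      define p where "p i = (SOME x. x \<in> E i)" for i
      define U where "U i = (if E i = {} then {} else
          (\<Union>k\<in>{..nat \<lfloor>R / \<rho> i\<rfloor>}. cball (p i + (real k * \<rho> i - p i \<bullet> e) *\<^sub>R e) (3 * \<rho> i)))" for i
      have D0: "0 \<le> D i" for i unfolding D_def using E(2) by (rule diameter_ge_0)
      have DR: "D i \<le> R" for i unfolding D_def using E(3) by simp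
      have \<eta>pos: "0 < \<eta> i" "\<eta> i \<le> R" for i unfolding \<eta>_def using R \<epsilon> by auto
      have \<rho>: "0 < \<rho> i" "\<rho> i \<le> R" for i unfolding \<rho>_def using \<eta>pos[of i] DR[of i] by auto
      have \<rho>pow: "\<rho> i ^ (?d - 1) \<le> D i ^ (?d - 1) + \<epsilon> * (1/2)^i" for i
      proof (cases "?d = 1")
        case True then show ?thesis using \<epsilon> by simp
      next
        case False
        then have d1: "?d - 1 \<noteq> 0" using DIM_positive[where 'a='a] by linarith
        show ?thesis
        proof (cases "\<rho> i = D i")
          case True then show ?thesis using \<epsilon> by simp
        next
          case ne: False
          then have "\<rho> i = \<eta> i" unfolding \<rho>_def by (simp add: max_def split: if_splits)
          have x0: "\<epsilon> * (1/2)^i > 0" using \<epsilon> by simp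
          have "\<eta> i \<le> (\<epsilon> * (1/2)^i) powr (1 / real (?d - 1))" unfolding \<eta>_def using False by simp
          then have "\<eta> i ^ (?d - 1) \<le> ((\<epsilon> * (1/2)^i) powr (1 / real (?d - 1))) ^ (?d - 1)"
            using \<eta>pos[of i] by (intro power_mono) auto
          also have "\<dots> = ((\<epsilon> * (1/2)^i) powr (1 / real (?d - 1))) powr (real (?d - 1))"
            by (rule powr_realpow[symmetric]) (use \<epsilon> in simp)
          also have "\<dots> = (\<epsilon> * (1/2)^i) powr (1 / real (?d - 1) * real (?d - 1))"
            by (rule powr_powr)
          also have "1 / real (?d - 1) * real (?d - 1) = 1" using d1 by simp
          also have "(\<epsilon> * (1/2)^i) powr 1 = \<epsilon> * (1/2)^i" using x0 by simp
          finally have eta: "\<eta> i ^ (?d - 1) \<le> \<epsilon> * (1/2)^i" .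
          have D0': "0 \<le> D i ^ (?d - 1)" using D0[of i] by simp
          show ?thesis unfolding \<open>\<rho> i = \<eta> i\<close> using eta D0' by linarith
        qed
      qed
      have cov: "slab e R \<inter> S \<subseteq> (\<Union>i. U i)"
      proof
        fix z assume z: "z \<in> slab e R \<inter> S"
        then obtain q t where q: "q \<in> F" "z = q + t *\<^sub>R e" using sub by blast
        then obtain i where i: "q \<in> E i" using E(1) by blast
        then have ne: "E i \<noteq> {}" by blast
        have pi: "p i \<in> E i" unfolding p_def using i by (rule someI)
        have "dist (p i) q \<le> D i" unfolding D_def using E(2) pi i by (rule diameter_bounded_bound)
        then have "dist (p i) q \<le> \<rho> i" unfolding \<rho>_def by simp
        then have "z \<in> (\<Union>k\<in>{..nat \<lfloor>R / \<rho> i\<rfloor>}. cball (p i + (real k * \<rho> i - p i \<bullet> e) *\<^sub>R e) (3 * \<rho> i))"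
          using z by (intro sweep_cover[OF e \<rho>(1) \<rho>(2) _ q(2)]) auto
        then show "z \<in> (\<Union>i. U i)" unfolding U_def using ne by auto
      qed
      have Um: "U i \<in> sets lborel" for i unfolding U_def by auto
      have Ui: "emeasure lborel (U i) \<le> ennreal (Kc ?d * R) * hcost (?d - 1) (E i) + ennreal (B * R * \<epsilon> * (1/2)^i)" for i
      proof (cases "E i = {}")
        case True then show ?thesis unfolding U_def by simp
      next
        case False
        have "emeasure lborel (U i) \<le> ennreal (B * R * \<rho> i ^ (?d - 1))"
          unfolding U_def B_def using False sweep_piece[OF e R \<rho>(1) \<rho>(2), of "p i"] by (simp add: mult.assoc)
        also have "\<dots> \<le> ennreal (B * R * (D i ^ (?d - 1) + \<epsilon> * (1/2)^i))"
          using \<rho>pow[of i] B R by (intro ennreal_leI mult_left_mono) auto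
        also have "\<dots> = ennreal (B * R * D i ^ (?d - 1)) + ennreal (B * R * \<epsilon> * (1/2)^i)"
          using B R D0[of i] \<epsilon> by (simp add: ring_distribs ennreal_plus[symmetric] del: ennreal_plus)
        also have "B * R * D i ^ (?d - 1) = Kc ?d * R * (\<omega> * (D i / 2) ^ (?d - 1))"
        proof -
          have "Kc ?d * R * (\<omega> * (D i / 2) ^ (?d - 1)) = (Kc ?d * \<omega>) * R * D i ^ (?d - 1) / 2 ^ (?d - 1)"
            by (simp add: power_divide)
          also have "\<dots> = B * R * D i ^ (?d - 1)" unfolding K by simp
          finally show ?thesis by (rule sym)
        qed
        also have "ennreal (Kc ?d * R * (\<omega> * (D i / 2) ^ (?d - 1))) = ennreal (Kc ?d * R) * ennreal (\<omega> * (D i / 2) ^ (?d - 1))"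
          by (rule ennreal_mult) (use KR \<omega> D0[of i] in auto)
        also have "\<dots> = ennreal (Kc ?d * R) * hcost (?d - 1) (E i)"
          unfolding hcost_def \<omega>_def D_def using False by simp
        finally show ?thesis by simp
      qed
      have geo: "(\<lambda>i. B * R * \<epsilon> * (1/2)^i) sums (B * R * \<epsilon> * 2)"
        using sums_mult[OF geometric_sums[of "1/2::real"], of "B * R * \<epsilon>"] by simp
      have "emeasure lborel (slab e R \<inter> S) \<le> emeasure lborel (\<Union>i. U i)"
        using cov Um by (intro emeasure_mono) auto
      also have "\<dots> \<le> (\<Sum>i. emeasure lborel (U i))"
        using Um by (intro emeasure_subadditive_countably) auto
      also have "\<dots> \<le> (\<Sum>i. ennreal (Kc ?d * R) * hcost (?d - 1) (E i) + ennreal (B * R * \<epsilon> * (1/2)^i))"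
        using Ui by (intro suminf_le) auto
      also have "\<dots> = ennreal (Kc ?d * R) * (\<Sum>i. hcost (?d - 1) (E i)) + (\<Sum>i. ennreal (B * R * \<epsilon> * (1/2)^i))"
        by (subst suminf_add[symmetric]) auto
      also have "(\<Sum>i. ennreal (B * R * \<epsilon> * (1/2)^i)) = ennreal (B * R * \<epsilon> * 2)"
        using geo B R \<epsilon> by (intro suminf_ennreal_eq) auto
      also have "ennreal (Kc ?d * R) * (\<Sum>i. hcost (?d - 1) (E i)) \<le> ennreal (Kc ?d * R) * (?H + ennreal \<epsilon>)"
        using Es by (intro mult_left_mono) auto
      also have "ennreal (Kc ?d * R) * (?H + ennreal \<epsilon>) + ennreal (B * R * \<epsilon> * 2)
          = ennreal (Kc ?d * R) * ?H + ennreal ((Kc ?d * R + 2 * B * R) * \<epsilon>)"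
      proof -
        have a: "ennreal (Kc ?d * R) * ennreal \<epsilon> = ennreal (Kc ?d * R * \<epsilon>)"
          by (rule ennreal_mult[symmetric]) (use KR \<epsilon> in auto)
        have b: "ennreal (Kc ?d * R * \<epsilon>) + ennreal (B * R * \<epsilon> * 2) = ennreal ((Kc ?d * R + 2 * B * R) * \<epsilon>)"
        proof -
          have "ennreal (Kc ?d * R * \<epsilon>) + ennreal (B * R * \<epsilon> * 2) = ennreal (Kc ?d * R * \<epsilon> + B * R * \<epsilon> * 2)"
            by (rule ennreal_plus[symmetric]) (use KR \<epsilon> B R in auto)
          also have "Kc ?d * R * \<epsilon> + B * R * \<epsilon> * 2 = (Kc ?d * R + 2 * B * R) * \<epsilon>" by (simp add: algebra_simps)
          finally show ?thesis .
        qed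
        show ?thesis by (simp only: distrib_left a add.assoc b)
      qed
      finally show "emeasure lborel (slab e R \<inter> S) \<le> ennreal (Kc ?d * R) * ?H + ennreal \<epsilon>0"
        using \<epsilon>eq by simp
    qed
  qed
qed


lemma grad_ineq:
  fixes g :: "'a::real_normed_vector \<Rightarrow> real"
  assumes cv: "convex_on S g" and x: "x \<in> S" and z: "z \<in> S" and D: "(g has_derivative Dg) (at x)"
  shows "g x + Dg (z - x) \<le> g z"
proof -
  define v where "v = z - x"
  have lin: "linear Dg" using has_derivative_bounded_linear[OF D] bounded_linear.linear by blast
  show ?thesis
  proof (cases "v = 0")
    case True
    then show ?thesis using linear_0[OF lin] unfolding v_def by simp
  next
    case False
    then have nv: "norm v > 0" by simp
    have "Dg v \<le> g z - g x + e" if e: "e > 0" for e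
    proof -
      define \<epsilon> where "\<epsilon> = e / norm v"
      have \<epsilon>: "\<epsilon> > 0" unfolding \<epsilon>_def using e nv by simp
      obtain \<delta> where \<delta>: "\<delta> > 0" and H: "\<And>y. norm (y - x) < \<delta> \<Longrightarrow> norm (g y - g x - Dg (y - x)) \<le> \<epsilon> * norm (y - x)"
        using D \<epsilon> unfolding has_derivative_at_alt by blast
      define t where "t = min 1 (\<delta> / (2 * norm v))"
      have t: "0 < t" "t \<le> 1" unfolding t_def using \<delta> nv by auto
      have tv: "t * norm v < \<delta>"
      proof -
        have "t * norm v \<le> (\<delta> / (2 * norm v)) * norm v" unfolding t_def using nv by (intro mult_right_mono) auto
        also have "\<dots> = \<delta> / 2" using nv by simp
        finally show ?thesis using \<delta> by simp
      qed
      define y where "y = x + t *\<^sub>R v"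
      have yx: "y - x = t *\<^sub>R v" unfolding y_def by simp
      have "norm (y - x) < \<delta>" using yx tv t by simp
      then have "\<bar>g y - g x - t * Dg v\<bar> \<le> \<epsilon> * (t * norm v)"
        using H[of y] yx t linear_cmul[OF lin, of t v] by simp
      then have 1: "t * Dg v \<le> g y - g x + \<epsilon> * (t * norm v)" by linarith
      have "y = (1 - t) *\<^sub>R x + t *\<^sub>R z" unfolding y_def v_def by (simp add: algebra_simps)
      then have "g y \<le> (1 - t) * g x + t * g z" using convex_onD[OF cv, of t x z] t x z by simp
      with 1 have "t * Dg v \<le> t * (g z - g x) + t * (\<epsilon> * norm v)" by (simp add: algebra_simps)
      then have "t * Dg v \<le> t * (g z - g x + \<epsilon> * norm v)" by (simp add: algebra_simps)
      then have "Dg v \<le> g z - g x + \<epsilon> * norm v" using t by simp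
      then show ?thesis unfolding \<epsilon>_def using nv by simp
    qed
    then have "Dg v \<le> g z - g x" by (rule field_le_epsilon)
    then show ?thesis unfolding v_def by simp
  qed
qed

lemma deriv_bound:
  fixes g :: "'a::real_normed_vector \<Rightarrow> real"
  assumes cv: "convex_on S g" and S: "open S" and x: "x \<in> S" and D: "(g has_derivative Dg) (at x)"
    and Lip: "\<And>a b. a \<in> S \<Longrightarrow> b \<in> S \<Longrightarrow> \<bar>g a - g b\<bar> \<le> M * dist a b"
  shows "\<bar>Dg w\<bar> \<le> M * norm w"
proof -
  have lin: "linear Dg" using has_derivative_bounded_linear[OF D] bounded_linear.linear by blast
  obtain r where r: "r > 0" "ball x r \<subseteq> S" using S x open_contains_ball by blast
  have one: "Dg u \<le> M * norm u" for u
  proof (cases "u = 0")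
    case True then show ?thesis using linear_0[OF lin] by simp
  next
    case False
    then have nu: "norm u > 0" by simp
    define t where "t = r / (2 * norm u)"
    have t: "t > 0" unfolding t_def using r nu by simp
    have "norm (t *\<^sub>R u) = r / 2" unfolding t_def using nu r by simp
    then have zS: "x + t *\<^sub>R u \<in> S" using r by (intro subsetD[OF r(2)]) (simp add: dist_norm)
    have "g x + Dg (t *\<^sub>R u) \<le> g (x + t *\<^sub>R u)" using grad_ineq[OF cv x zS D] by simp
    moreover have "g (x + t *\<^sub>R u) - g x \<le> M * dist (x + t *\<^sub>R u) x" using Lip[OF zS x] by linarith
    moreover have "dist (x + t *\<^sub>R u) x = t * norm u" using t by (simp add: dist_norm)
    ultimately have "t * Dg u \<le> t * (M * norm u)" using linear_cmul[OF lin, of t u] by (simp add: algebra_simps)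
    then show ?thesis using t by simp
  qed
  have "Dg w \<le> M * norm w" by (rule one)
  moreover have "- Dg w \<le> M * norm w" using one[of "- w"] linear_neg[OF lin, of w] by simp
  ultimately show ?thesis by linarith
qed

lemma jensen_basis:
  fixes g :: "'a::euclidean_space \<Rightarrow> real"
  assumes cv: "convex_on S g"
    and pts: "\<And>i. i \<in> Basis \<Longrightarrow> x + (real DIM('a) * (v \<bullet> i)) *\<^sub>R i \<in> S" and lin: "linear L"
  shows "g (x + v) - g x - L v \<le>
    (\<Sum>i\<in>Basis. g (x + (real DIM('a) * (v \<bullet> i)) *\<^sub>R i) - g x - (real DIM('a) * (v \<bullet> i)) * L i) / real DIM('a)"
proof -
  let ?d = "real DIM('a)"
  have d0: "?d > 0" by simp
  define y where "y i = x + (?d * (v \<bullet> i)) *\<^sub>R i" for i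
  have "(\<Sum>i\<in>Basis. (1 / ?d) *\<^sub>R y i) = (\<Sum>i\<in>(Basis::'a set). (1 / ?d) *\<^sub>R x) + (\<Sum>i\<in>Basis. (v \<bullet> i) *\<^sub>R i)"
  proof -
    have "(1 / ?d) *\<^sub>R y i = (1 / ?d) *\<^sub>R x + (v \<bullet> i) *\<^sub>R i" for i
      unfolding y_def using d0 by (simp add: scaleR_add_right)
    then show ?thesis by (simp add: sum.distrib)
  qed
  also have "(\<Sum>i\<in>(Basis::'a set). (1 / ?d) *\<^sub>R x) = x" using d0 by (simp add: sum_constant_scaleR)
  also have "(\<Sum>i\<in>Basis. (v \<bullet> i) *\<^sub>R i) = v" by (rule euclidean_representation)
  finally have xv: "(\<Sum>i\<in>Basis. (1 / ?d) *\<^sub>R y i) = x + v" .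
  have "g (\<Sum>i\<in>Basis. (1 / ?d) *\<^sub>R y i) \<le> (\<Sum>i\<in>Basis. (1 / ?d) * g (y i))"
    by (rule convex_on_sum[OF _ _ cv]) (use d0 pts y_def in auto)
  then have 1: "g (x + v) \<le> (\<Sum>i\<in>Basis. g (y i)) / ?d" using xv by (simp add: sum_divide_distrib)
  have "L v = L (\<Sum>i\<in>Basis. (v \<bullet> i) *\<^sub>R i)" by (simp add: euclidean_representation)
  also have "\<dots> = (\<Sum>i\<in>Basis. L ((v \<bullet> i) *\<^sub>R i))" by (rule linear_sum[OF lin])
  also have "\<dots> = (\<Sum>i\<in>Basis. (v \<bullet> i) * L i)" using linear_cmul[OF lin] by simp
  finally have 2: "L v = (\<Sum>i\<in>Basis. (?d * (v \<bullet> i)) * L i) / ?d"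
    using d0 by (simp add: sum_divide_distrib)
  have 3: "g x = (\<Sum>i\<in>(Basis::'a set). g x) / ?d" using d0 by simp
  have "g (x + v) - g x - L v \<le> (\<Sum>i\<in>Basis. g (y i)) / ?d - (\<Sum>i\<in>(Basis::'a set). g x) / ?d - (\<Sum>i\<in>Basis. (?d * (v \<bullet> i)) * L i) / ?d"
    using 1 2 3 by linarith
  also have "\<dots> = (\<Sum>i\<in>Basis. g (y i) - g x - (?d * (v \<bullet> i)) * L i) / ?d"
    by (simp add: sum_subtractf diff_divide_distrib)
  finally show ?thesis unfolding y_def .
qed


definition Gfun :: "('a::euclidean_space \<Rightarrow> real) \<Rightarrow> real \<Rightarrow> 'a \<Rightarrow> 'a \<Rightarrow> real" where
  "Gfun g R i x = g (x + (2*R) *\<^sub>R i) - g (x + R *\<^sub>R i) - g (x + (-R) *\<^sub>R i) + g (x + (-2*R) *\<^sub>R i)"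

lemma line_facts:
  fixes g :: "'a::real_normed_vector \<Rightarrow> real"
  assumes cv: "convex_on S g" and R: "R > 0"
    and p1: "x + (2*R) *\<^sub>R i \<in> S" and p2: "x + (-2*R) *\<^sub>R i \<in> S"
  shows "convex_on {t. x + t *\<^sub>R i \<in> S} (\<lambda>t. g (x + t *\<^sub>R i))"
    and "{-2*R..2*R} \<subseteq> {t. x + t *\<^sub>R i \<in> S}"
proof -
  show c: "convex_on {t. x + t *\<^sub>R i \<in> S} (\<lambda>t. g (x + t *\<^sub>R i))" by (rule convex_on_line[OF cv])
  have cI: "convex {t. x + t *\<^sub>R i \<in> S}" using convex_on_imp_convex[OF c] .
  show "{-2*R..2*R} \<subseteq> {t. x + t *\<^sub>R i \<in> S}"
  proof
    fix t assume "t \<in> {-2*R..2*R}"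
    then show "t \<in> {t. x + t *\<^sub>R i \<in> S}"
      using real_convex_between[OF cI, of "-2*R" "2*R" t] p1 p2 by auto
  qed
qed

lemma oneD_nonneg:
  fixes \<phi> :: "real \<Rightarrow> real"
  assumes cv: "convex_on I \<phi>" and R: "R > 0" and sub: "{-2*R..2*R} \<subseteq> I"
  shows "0 \<le> \<phi> (2*R) - \<phi> R - \<phi> (-R) + \<phi> (-2*R)"
proof -
  have "(\<phi> (-R) - \<phi> (-2*R)) / (-R - (-2*R)) \<le> (\<phi> (2*R) - \<phi> R) / (2*R - R)"
    by (rule slope_mono[OF cv]) (use R sub in auto)
  then show ?thesis using R by (simp add: divide_simps)
qed

lemma Gfun_nonneg:
  fixes g :: "'a::euclidean_space \<Rightarrow> real"
  assumes cv: "convex_on S g" and R: "R > 0"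
    and p1: "x + (2*R) *\<^sub>R i \<in> S" and p2: "x + (-2*R) *\<^sub>R i \<in> S"
  shows "0 \<le> Gfun g R i x"
proof -
  note lf = line_facts[OF cv R p1 p2]
  have "0 \<le> g (x + (2*R) *\<^sub>R i) - g (x + R *\<^sub>R i) - g (x + (-R) *\<^sub>R i) + g (x + (-2*R) *\<^sub>R i)"
    using oneD_nonneg[OF lf(1) R lf(2)] by simp
  then show ?thesis unfolding Gfun_def .
qed

lemma err_bound_G:
  fixes g :: "'a::euclidean_space \<Rightarrow> real"
  assumes cv: "convex_on S g" and x: "x \<in> S" and D: "(g has_derivative Dg) (at x)"
    and R: "R > 0" and pts: "\<And>i. i \<in> Basis \<Longrightarrow> x + (2*R) *\<^sub>R i \<in> S \<and> x + (-2*R) *\<^sub>R i \<in> S"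
    and v: "real DIM('a) * norm v \<le> R"
  shows "g (x + v) - g x - Dg v \<le> (\<Sum>i\<in>Basis. Gfun g R i x)"
proof -
  let ?d = "real DIM('a)"
  have d0: "?d \<ge> 1" using DIM_positive[where 'a='a] by linarith
  have lin: "linear Dg" using has_derivative_bounded_linear[OF D] bounded_linear.linear by blast
  define t where "t i = ?d * (v \<bullet> i)" for i
  have tR: "\<bar>t i\<bar> \<le> R" if "i \<in> Basis" for i
  proof -
    have "\<bar>t i\<bar> = ?d * \<bar>v \<bullet> i\<bar>" unfolding t_def by (simp add: abs_mult)
    also have "\<dots> \<le> ?d * norm v" using Basis_le_norm[OF that, of v] by (intro mult_left_mono) auto
    finally show ?thesis using v by linarith
  qed
  have trm: "g (x + t i *\<^sub>R i) - g x - t i * Dg i \<le> Gfun g R i x"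
    and mem: "x + t i *\<^sub>R i \<in> S" if i: "i \<in> Basis" for i
  proof -
    note lf = line_facts[OF cv R conjunct1[OF pts[OF i]] conjunct2[OF pts[OF i]]]
    have sg: "g (x + 0 *\<^sub>R i) + Dg i * s \<le> g (x + s *\<^sub>R i)" if "s \<in> {t. x + t *\<^sub>R i \<in> S}" for s
    proof -
      have "g x + Dg ((x + s *\<^sub>R i) - x) \<le> g (x + s *\<^sub>R i)"
        using grad_ineq[OF cv x _ D, of "x + s *\<^sub>R i"] that by simp
      then show ?thesis using linear_cmul[OF lin, of s i] by (simp add: mult.commute)
    qed
    have "g (x + t i *\<^sub>R i) - g (x + 0 *\<^sub>R i) - Dg i * t i
        \<le> g (x + (2*R) *\<^sub>R i) - g (x + R *\<^sub>R i) - g (x + (-R) *\<^sub>R i) + g (x + (-2*R) *\<^sub>R i)"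
      by (rule oneD_est(1)[OF lf(1) R lf(2), of "Dg i" "t i"]) (use sg tR[OF i] in auto)
    then show "g (x + t i *\<^sub>R i) - g x - t i * Dg i \<le> Gfun g R i x"
      unfolding Gfun_def by (simp add: mult.commute)
    have "t i \<in> {-2*R..2*R}" using tR[OF i] R by auto
    then show "x + t i *\<^sub>R i \<in> S" using lf(2) by blast
  qed
  have "g (x + v) - g x - Dg v \<le> (\<Sum>i\<in>Basis. g (x + t i *\<^sub>R i) - g x - t i * Dg i) / ?d"
    unfolding t_def by (rule jensen_basis[OF cv _ lin]) (use mem t_def in auto)
  also have "\<dots> \<le> (\<Sum>i\<in>Basis. Gfun g R i x) / ?d"
    using trm by (intro divide_right_mono sum_mono) auto
  also have "\<dots> \<le> (\<Sum>i\<in>Basis. Gfun g R i x)"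
  proof -
    have "0 \<le> (\<Sum>i\<in>Basis. Gfun g R i x)"
      using Gfun_nonneg[OF cv R] pts by (intro sum_nonneg) auto
    then have "(\<Sum>i\<in>Basis. Gfun g R i x) / ?d \<le> (\<Sum>i\<in>Basis. Gfun g R i x) / 1"
      using d0 by (intro divide_left_mono) auto
    then show ?thesis by simp
  qed
  finally show ?thesis .
qed


lemma convex_partials_diff:
  fixes g :: "'a::euclidean_space \<Rightarrow> real"
  assumes cv: "convex_on S g" and S: "open S" and x: "x \<in> S"
    and part: "\<And>i \<epsilon>. i \<in> Basis \<Longrightarrow> \<epsilon> > 0 \<Longrightarrow>
        \<exists>\<tau>>0. \<forall>t. t \<noteq> 0 \<and> \<bar>t\<bar> < \<tau> \<longrightarrow> \<bar>(g (x + t *\<^sub>R i) - g x) / t - c i\<bar> \<le> \<epsilon>"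
  shows "(g has_derivative (\<lambda>v. v \<bullet> (\<Sum>i\<in>Basis. c i *\<^sub>R i))) (at x)"
proof -
  let ?d = "real DIM('a)"
  have d0: "?d > 0" by simp
  define w where "w = (\<Sum>i\<in>Basis. c i *\<^sub>R i)"
  have bl: "bounded_linear (\<lambda>v. v \<bullet> w)" by (rule bounded_linear_inner_left)
  have lin: "linear (\<lambda>v. v \<bullet> w)" using bl bounded_linear.linear by blast
  have Li: "i \<bullet> w = c i" if "i \<in> Basis" for i
    unfolding w_def using that by (simp add: inner_sum_right inner_Basis if_distrib sum.delta cong: if_cong)
  obtain r0 where r0: "r0 > 0" "ball x r0 \<subseteq> S" using S x open_contains_ball by blast
  have main: "\<forall>\<epsilon>>0. \<exists>\<delta>>0. \<forall>y. norm (y - x) < \<delta> \<longrightarrow> norm (g y - g x - (y - x) \<bullet> w) \<le> \<epsilon> * norm (y - x)"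
  proof (intro allI impI)
    fix \<epsilon> :: real assume \<epsilon>: "\<epsilon> > 0"
    define \<epsilon>' where "\<epsilon>' = \<epsilon> / ?d"
    have \<epsilon>': "\<epsilon>' > 0" unfolding \<epsilon>'_def using \<epsilon> by simp
    have "\<forall>i\<in>Basis. \<exists>\<tau>>0. \<forall>t. t \<noteq> 0 \<and> \<bar>t\<bar> < \<tau> \<longrightarrow> \<bar>(g (x + t *\<^sub>R i) - g x) / t - c i\<bar> \<le> \<epsilon>'"
      using part \<epsilon>' by blast
    then obtain \<tau>f where \<tau>f: "\<And>i. i \<in> Basis \<Longrightarrow> \<tau>f i > 0"
      "\<And>i t. i \<in> Basis \<Longrightarrow> t \<noteq> 0 \<Longrightarrow> \<bar>t\<bar> < \<tau>f i \<Longrightarrow> \<bar>(g (x + t *\<^sub>R i) - g x) / t - c i\<bar> \<le> \<epsilon>'"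
      by metis
    define \<tau>0 where "\<tau>0 = Min (\<tau>f ` Basis)"
    have \<tau>0: "\<tau>0 > 0" unfolding \<tau>0_def using \<tau>f(1) by (simp add: Min_gr_iff)
    have \<tau>0le: "\<tau>0 \<le> \<tau>f i" if "i \<in> Basis" for i unfolding \<tau>0_def using that by simp
    define m where "m = min \<tau>0 r0"
    have m: "m > 0" unfolding m_def using \<tau>0 r0 by simp
    have hb: "g (x + u) - g x - u \<bullet> w \<le> \<epsilon> * norm u" if u: "?d * norm u < m" for u
    proof -
      define t where "t i = ?d * (u \<bullet> i)" for i
      have tb: "\<bar>t i\<bar> \<le> ?d * norm u" if "i \<in> Basis" for i
        unfolding t_def using Basis_le_norm[OF that, of u] d0 by (simp add: abs_mult)
      have mem: "x + t i *\<^sub>R i \<in> S" if i: "i \<in> Basis" for i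
      proof -
        have "norm (t i *\<^sub>R i) = \<bar>t i\<bar>" using i by simp
        also have "\<dots> < r0" using tb[OF i] u unfolding m_def by linarith
        finally show ?thesis using r0 by (intro subsetD[OF r0(2)]) (simp add: dist_norm)
      qed
      have trm: "g (x + t i *\<^sub>R i) - g x - t i * (i \<bullet> w) \<le> ?d * norm u * \<epsilon>'" if i: "i \<in> Basis" for i
      proof (cases "t i = 0")
        case True then show ?thesis using \<epsilon>' by simp
      next
        case False
        have lt: "\<bar>t i\<bar> < \<tau>f i" using tb[OF i] u \<tau>0le[OF i] unfolding m_def by linarith
        have q: "\<bar>(g (x + t i *\<^sub>R i) - g x) / t i - c i\<bar> \<le> \<epsilon>'" using \<tau>f(2)[OF i False lt] .
        have "g (x + t i *\<^sub>R i) - g x - t i * (i \<bullet> w) = t i * ((g (x + t i *\<^sub>R i) - g x) / t i - c i)"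
          using False Li[OF i] by (simp add: field_simps)
        also have "\<dots> \<le> \<bar>t i\<bar> * \<epsilon>'"
        proof -
          have "t i * ((g (x + t i *\<^sub>R i) - g x) / t i - c i) \<le> \<bar>t i * ((g (x + t i *\<^sub>R i) - g x) / t i - c i)\<bar>" by simp
          also have "\<dots> = \<bar>t i\<bar> * \<bar>(g (x + t i *\<^sub>R i) - g x) / t i - c i\<bar>" by (simp add: abs_mult)
          also have "\<dots> \<le> \<bar>t i\<bar> * \<epsilon>'" using q by (intro mult_left_mono) auto
          finally show ?thesis .
        qed
        also have "\<dots> \<le> ?d * norm u * \<epsilon>'" using tb[OF i] \<epsilon>' by (intro mult_right_mono) auto
        finally show ?thesis .
      qed
      have "g (x + u) - g x - u \<bullet> w \<le> (\<Sum>i\<in>Basis. g (x + t i *\<^sub>R i) - g x - t i * (i \<bullet> w)) / ?d"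
        unfolding t_def by (rule jensen_basis[OF cv _ lin]) (use mem t_def in auto)
      also have "\<dots> \<le> (\<Sum>i\<in>(Basis::'a set). ?d * norm u * \<epsilon>') / ?d"
        using trm by (intro divide_right_mono sum_mono) auto
      also have "\<dots> = ?d * norm u * \<epsilon>'" using d0 by simp
      also have "\<dots> = \<epsilon> * norm u" unfolding \<epsilon>'_def using d0 by simp
      finally show ?thesis .
    qed
    define \<delta> where "\<delta> = m / ?d"
    have \<delta>: "\<delta> > 0" unfolding \<delta>_def using m d0 by simp
    show "\<exists>\<delta>>0. \<forall>y. norm (y - x) < \<delta> \<longrightarrow> norm (g y - g x - (y - x) \<bullet> w) \<le> \<epsilon> * norm (y - x)"
    proof (intro exI[of _ \<delta>] conjI allI impI \<delta>)
      fix y assume y: "norm (y - x) < \<delta>"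
      define u where "u = y - x"
      have du: "?d * norm u < m" using y d0 unfolding u_def \<delta>_def by (simp add: field_simps)
      have du': "?d * norm (- u) < m" using du by simp
      have h1: "g (x + u) - g x - u \<bullet> w \<le> \<epsilon> * norm u" by (rule hb[OF du])
      have h2: "g (x + - u) - g x - (- u) \<bullet> w \<le> \<epsilon> * norm u" using hb[OF du'] by simp
      have nu: "norm u < r0"
      proof -
        have "norm u \<le> ?d * norm u" using d0 by (simp add: mult_le_cancel_right1 DIM_positive)
        then show ?thesis using du unfolding m_def by linarith
      qed
      have in1: "x + u \<in> S" using nu r0 by (intro subsetD[OF r0(2)]) (simp add: dist_norm)
      have in2: "x - u \<in> S" using nu r0 by (intro subsetD[OF r0(2)]) (simp add: dist_norm)
      have "g ((1 - 1/2) *\<^sub>R (x + u) + (1/2) *\<^sub>R (x - u)) \<le> (1 - 1/2) * g (x + u) + (1/2) * g (x - u)"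
        by (rule convex_onD[OF cv]) (use in1 in2 in auto)
      moreover have "(1 - 1/2) *\<^sub>R (x + u) + (1/2::real) *\<^sub>R (x - u) = x"
        by (simp add: algebra_simps scaleR_add_left[symmetric] del: scaleR_add_left)
      ultimately have mid: "g x \<le> (g (x + u) + g (x - u)) / 2" by simp
      have "\<bar>g (x + u) - g x - u \<bullet> w\<bar> \<le> \<epsilon> * norm u"
        using h1 h2 mid by (simp add: inner_minus_left)
      then show "norm (g y - g x - (y - x) \<bullet> w) \<le> \<epsilon> * norm (y - x)" unfolding u_def by simp
    qed
  qed
  show ?thesis unfolding has_derivative_at_alt w_def[symmetric] using bl main by blast
qed


locale cvxlip =
  fixes g :: "'a::euclidean_space \<Rightarrow> real" and S :: "'a set" and M :: real
  assumes cv: "convex_on S g" and opn: "open S" and M0: "M \<ge> 0"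
    and Lip: "\<And>a b. a \<in> S \<Longrightarrow> b \<in> S \<Longrightarrow> \<bar>g a - g b\<bar> \<le> M * dist a b"
begin

definition qd :: "'a \<Rightarrow> 'a \<Rightarrow> real \<Rightarrow> real" where
  "qd e x t = (g (x + t *\<^sub>R e) - g x) / t"

definition upf :: "'a \<Rightarrow> nat \<Rightarrow> 'a \<Rightarrow> real" where
  "upf e n x = (if x \<in> S \<and> x + (1 / real (Suc n)) *\<^sub>R e \<in> S then qd e x (1 / real (Suc n)) else M)"

definition umf :: "'a \<Rightarrow> nat \<Rightarrow> 'a \<Rightarrow> real" where
  "umf e n x = (if x \<in> S \<and> x + (- 1 / real (Suc n)) *\<^sub>R e \<in> S then qd e x (- 1 / real (Suc n)) else - M)"

definition Dp :: "'a \<Rightarrow> 'a \<Rightarrow> real" where "Dp e x = (INF n. upf e n x)"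
definition Dm :: "'a \<Rightarrow> 'a \<Rightarrow> real" where "Dm e x = (SUP n. umf e n x)"

lemma cS: "convex S" using cv convex_on_imp_convex by blast

lemma qbound:
  assumes e: "norm e = 1" and "x \<in> S" "x + t *\<^sub>R e \<in> S" "t \<noteq> 0"
  shows "\<bar>qd e x t\<bar> \<le> M"
proof -
  have "\<bar>g (x + t *\<^sub>R e) - g x\<bar> \<le> M * dist (x + t *\<^sub>R e) x" using Lip assms by blast
  also have "dist (x + t *\<^sub>R e) x = \<bar>t\<bar>" using e by (simp add: dist_norm)
  finally show ?thesis unfolding qd_def using assms by (simp add: abs_divide divide_le_eq)
qed

lemma line_between:
  assumes "x + a *\<^sub>R e \<in> S" "x + b *\<^sub>R e \<in> S" "a \<le> t" "t \<le> b"
  shows "x + t *\<^sub>R e \<in> S"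
proof -
  have "convex {t. x + t *\<^sub>R e \<in> S}"
    using convex_on_imp_convex[OF convex_on_line[OF cv, of x e]] .
  then show ?thesis using real_convex_between[of "{t. x + t *\<^sub>R e \<in> S}" a b t] assms by auto
qed

lemma qmono:
  assumes x: "x \<in> S" and s: "x + s *\<^sub>R e \<in> S" and t: "x + t *\<^sub>R e \<in> S"
    and st: "s < t" "s \<noteq> 0" "t \<noteq> 0"
  shows "qd e x s \<le> qd e x t"
proof -
  define \<phi> where "\<phi> u = g (x + u *\<^sub>R e)" for u
  define I where "I = {u. x + u *\<^sub>R e \<in> S}"
  have cvI: "convex_on I \<phi>" unfolding \<phi>_def I_def by (rule convex_on_line[OF cv])
  have I: "s \<in> I" "t \<in> I" "0 \<in> I" using x s t unfolding I_def by auto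
  have q1: "qd e x u = (\<phi> u - \<phi> 0) / (u - 0)" for u unfolding qd_def \<phi>_def by simp
  have q2: "qd e x u = (\<phi> 0 - \<phi> u) / (0 - u)" for u
    unfolding qd_def \<phi>_def by (cases "u = 0") (simp_all add: divide_simps)
  consider "t < 0" | "s < 0" "0 < t" | "0 < s" using st by linarith
  then show ?thesis
  proof cases
    case 1
    have "(\<phi> 0 - \<phi> s) / (0 - s) \<le> (\<phi> 0 - \<phi> t) / (0 - t)"
      by (rule slope_mono[OF cvI I(1) I(3)]) (use st 1 in auto)
    then show ?thesis by (simp only: q2)
  next
    case 2
    have "(\<phi> 0 - \<phi> s) / (0 - s) \<le> (\<phi> t - \<phi> 0) / (t - 0)"
      by (rule slope_mono[OF cvI I(1) I(2)]) (use st 2 in auto)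
    then show ?thesis by (simp only: q2[of s] q1[of t])
  next
    case 3
    have "(\<phi> s - \<phi> 0) / (s - 0) \<le> (\<phi> t - \<phi> 0) / (t - 0)"
      by (rule slope_mono[OF cvI I(3) I(2)]) (use st 3 in auto)
    then show ?thesis by (simp only: q1)
  qed
qed

lemma upf_ge: "norm e = 1 \<Longrightarrow> - M \<le> upf e n x"
  unfolding upf_def using qbound[of e x "1 / real (Suc n)"] M0 by (auto simp: abs_le_iff)

lemma umf_le: "norm e = 1 \<Longrightarrow> umf e n x \<le> M"
  unfolding umf_def using qbound[of e x "- 1 / real (Suc n)"] M0 by (auto simp: abs_le_iff)

lemma upf_le: "upf e n x \<le> M \<or> (x \<in> S \<and> x + (1 / real (Suc n)) *\<^sub>R e \<in> S \<and> upf e n x = qd e x (1 / real (Suc n)))"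
  unfolding upf_def by auto

lemma bdd_up: "norm e = 1 \<Longrightarrow> bdd_below (range (\<lambda>n. upf e n x))"
  using upf_ge by (intro bdd_belowI) blast

lemma bdd_um: "norm e = 1 \<Longrightarrow> bdd_above (range (\<lambda>n. umf e n x))"
  using umf_le by (intro bdd_aboveI) blast

lemma Dp_le:
  assumes e: "norm e = 1" and x: "x \<in> S" and t: "t > 0" "x + t *\<^sub>R e \<in> S"
  shows "Dp e x \<le> qd e x t"
proof -
  obtain n :: nat where n: "1 / t < real (Suc n)"
    using reals_Archimedean2 by (metis less_Suc_eq of_nat_Suc of_nat_less_iff order_less_trans)
  have n': "1 / real (Suc n) < t" using n t by (simp add: field_simps)
  have p0: "x + 0 *\<^sub>R e \<in> S" using x by simp
  have mem: "x + (1 / real (Suc n)) *\<^sub>R e \<in> S"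
    by (rule line_between[OF p0 t(2)]) (use n' in auto)
  have "Dp e x \<le> upf e n x" unfolding Dp_def by (rule cINF_lower[OF bdd_up[OF e]]) simp
  also have "upf e n x = qd e x (1 / real (Suc n))" unfolding upf_def using x mem by simp
  also have "\<dots> \<le> qd e x t" by (rule qmono[OF x mem t(2) n']) (use t in auto)
  finally show ?thesis .
qed

lemma Dm_ge:
  assumes e: "norm e = 1" and x: "x \<in> S" and t: "t < 0" "x + t *\<^sub>R e \<in> S"
  shows "qd e x t \<le> Dm e x"
proof -
  obtain n :: nat where n: "- 1 / t < real (Suc n)"
    using reals_Archimedean2 by (metis less_Suc_eq of_nat_Suc of_nat_less_iff order_less_trans)
  have n': "t < - 1 / real (Suc n)" using n t by (simp add: field_simps)
  have p0: "x + 0 *\<^sub>R e \<in> S" using x by simp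
  have mem: "x + (- 1 / real (Suc n)) *\<^sub>R e \<in> S"
    by (rule line_between[OF t(2) p0]) (use n' in auto)
  have "qd e x t \<le> qd e x (- 1 / real (Suc n))" by (rule qmono[OF x t(2) mem n']) (use t in auto)
  also have "\<dots> = umf e n x" unfolding umf_def using x mem by simp
  also have "\<dots> \<le> Dm e x" unfolding Dm_def by (rule cSUP_upper[OF _ bdd_um[OF e]]) simp
  finally show ?thesis .
qed

lemma q_ge_Dm:
  assumes e: "norm e = 1" and x: "x \<in> S" and t: "t > 0" "x + t *\<^sub>R e \<in> S"
  shows "Dm e x \<le> qd e x t"
  unfolding Dm_def
proof (rule cSUP_least)
  fix n
  show "umf e n x \<le> qd e x t"
  proof (cases "x + (- 1 / real (Suc n)) *\<^sub>R e \<in> S")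
    case True
    have neg: "- 1 / real (Suc n) < 0" by simp
    have lt: "- 1 / real (Suc n) < t" using neg t by linarith
    have "umf e n x = qd e x (- 1 / real (Suc n))" unfolding umf_def using x True by simp
    also have "\<dots> \<le> qd e x t" by (rule qmono[OF x True t(2) lt]) (use t in auto)
    finally show ?thesis .
  next
    case False
    then have "umf e n x = - M" unfolding umf_def by simp
    then show ?thesis using qbound[OF e x t(2)] t by (simp add: abs_le_iff)
  qed
qed simp

lemma q_le_Dp:
  assumes e: "norm e = 1" and x: "x \<in> S" and t: "t < 0" "x + t *\<^sub>R e \<in> S"
  shows "qd e x t \<le> Dp e x"
  unfolding Dp_def
proof (rule cINF_greatest)
  fix n
  show "qd e x t \<le> upf e n x"
  proof (cases "x + (1 / real (Suc n)) *\<^sub>R e \<in> S")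
    case True
    have pos: "0 < 1 / real (Suc n)" by simp
    have lt: "t < 1 / real (Suc n)" using pos t by linarith
    have "upf e n x = qd e x (1 / real (Suc n))" unfolding upf_def using x True by simp
    moreover have "qd e x t \<le> qd e x (1 / real (Suc n))" by (rule qmono[OF x t(2) True lt]) (use t in auto)
    ultimately show ?thesis by simp
  next
    case False
    then have "upf e n x = M" unfolding upf_def by simp
    then show ?thesis using qbound[OF e x t(2)] t by (simp add: abs_le_iff)
  qed
qed simp

lemma Dp_ge: "norm e = 1 \<Longrightarrow> - M \<le> Dp e x"
  unfolding Dp_def by (rule cINF_greatest) (auto simp: upf_ge)

lemma Dm_le: "norm e = 1 \<Longrightarrow> Dm e x \<le> M"
  unfolding Dm_def by (rule cSUP_least) (auto simp: umf_le)

lemma Dm_le_Dp: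
  assumes e: "norm e = 1" and x: "x \<in> S"
  shows "Dm e x \<le> Dp e x"
  unfolding Dm_def
proof (rule cSUP_least)
  fix n
  show "umf e n x \<le> Dp e x"
  proof (cases "x + (- 1 / real (Suc n)) *\<^sub>R e \<in> S")
    case True
    then have "umf e n x = qd e x (- 1 / real (Suc n))" unfolding umf_def using x by simp
    also have "\<dots> \<le> Dp e x" by (rule q_le_Dp[OF e x _ True]) simp
    finally show ?thesis .
  next
    case False
    then show ?thesis unfolding umf_def using Dp_ge[OF e] by simp
  qed
qed simp

lemma Dp_le_M:
  assumes e: "norm e = 1" and x: "x \<in> S"
  shows "Dp e x \<le> M" and "- M \<le> Dm e x"
proof -
  have "Dp e x \<le> upf e 0 x" unfolding Dp_def by (rule cINF_lower[OF bdd_up[OF e]]) simp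
  moreover have "upf e 0 x \<le> M" unfolding upf_def using qbound[OF e x, of 1] by (auto simp: abs_le_iff)
  ultimately show "Dp e x \<le> M" by simp
  have "umf e 0 x \<le> Dm e x" unfolding Dm_def by (rule cSUP_upper[OF _ bdd_um[OF e]]) simp
  moreover have "- M \<le> umf e 0 x" unfolding umf_def using qbound[OF e x, of "-1"] by (auto simp: abs_le_iff)
  ultimately show "- M \<le> Dm e x" by simp
qed

lemma chain:
  assumes e: "norm e = 1" and a: "x + a *\<^sub>R e \<in> S" and b: "x + b *\<^sub>R e \<in> S" and ab: "a < b"
  shows "Dp e (x + a *\<^sub>R e) \<le> Dm e (x + b *\<^sub>R e)"
proof -
  have 1: "(x + a *\<^sub>R e) + (b - a) *\<^sub>R e = x + b *\<^sub>R e" by (simp add: algebra_simps)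
  have 2: "(x + b *\<^sub>R e) + (a - b) *\<^sub>R e = x + a *\<^sub>R e" by (simp add: algebra_simps)
  have "Dp e (x + a *\<^sub>R e) \<le> qd e (x + a *\<^sub>R e) (b - a)"
    by (rule Dp_le[OF e a]) (use ab in simp, simp only: 1 b)
  also have "\<dots> = qd e (x + b *\<^sub>R e) (a - b)"
    unfolding qd_def 1 2 using ab by (simp add: divide_simps) (simp add: algebra_simps)
  also have "\<dots> \<le> Dm e (x + b *\<^sub>R e)"
    by (rule Dm_ge[OF e b]) (use ab in simp, simp only: 2 a)
  finally show ?thesis .
qed

lemma partial_from_jump:
  assumes e: "norm e = 1" and x: "x \<in> S" and eq: "Dp e x = Dm e x" and \<epsilon>: "\<epsilon> > 0"
  shows "\<exists>\<tau>>0. \<forall>t. t \<noteq> 0 \<and> \<bar>t\<bar> < \<tau> \<longrightarrow> \<bar>qd e x t - Dp e x\<bar> \<le> \<epsilon>"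
proof -
  obtain r where r: "r > 0" "ball x r \<subseteq> S" using opn x open_contains_ball by blast
  have "(INF n. upf e n x) < Dp e x + \<epsilon>" unfolding Dp_def using \<epsilon> by simp
  then obtain n where n: "upf e n x < Dp e x + \<epsilon>"
    using cINF_less_iff[OF _ bdd_up[OF e]] by auto
  have "Dm e x - \<epsilon> < (SUP n. umf e n x)" unfolding Dm_def[symmetric] using \<epsilon> by simp
  then obtain m where m: "Dm e x - \<epsilon> < umf e m x"
    using less_cSUP_iff[OF _ bdd_um[OF e]] by auto
  define \<tau> where "\<tau> = min r (min (1 / real (Suc n)) (1 / real (Suc m)))"
  have \<tau>: "\<tau> > 0" unfolding \<tau>_def using r by simp
  show ?thesis
  proof (intro exI[of _ \<tau>] conjI allI impI \<tau>)
    fix t assume t: "t \<noteq> 0 \<and> \<bar>t\<bar> < \<tau>"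
    have tS: "x + t *\<^sub>R e \<in> S" using t e unfolding \<tau>_def by (intro subsetD[OF r(2)]) (simp add: dist_norm)
    show "\<bar>qd e x t - Dp e x\<bar> \<le> \<epsilon>"
    proof (cases "t > 0")
      case True
      have lo: "Dp e x \<le> qd e x t" using q_ge_Dm[OF e x True tS] eq by simp
      have hi: "qd e x t \<le> upf e n x"
      proof (cases "x + (1 / real (Suc n)) *\<^sub>R e \<in> S")
        case True': True
        have "\<bar>t\<bar> < 1 / real (Suc n)" using t unfolding \<tau>_def by simp
        then have tn: "t \<le> 1 / real (Suc n)" using abs_ge_self[of t] by linarith
        have "qd e x t \<le> qd e x (1 / real (Suc n))"
        proof (cases "t = 1 / real (Suc n)")
          case False then show ?thesis by (intro qmono[OF x tS True']) (use tn True in auto)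
        qed simp
        then show ?thesis unfolding upf_def using x True' by simp
      next
        case False
        then show ?thesis unfolding upf_def using qbound[OF e x tS] t by (simp add: abs_le_iff)
      qed
      show ?thesis using lo hi n by simp
    next
      case False
      then have tneg: "t < 0" using t by simp
      have hi: "qd e x t \<le> Dp e x" by (rule q_le_Dp[OF e x tneg tS])
      have lo: "umf e m x \<le> qd e x t"
      proof (cases "x + (- 1 / real (Suc m)) *\<^sub>R e \<in> S")
        case True': True
        have "\<bar>t\<bar> < 1 / real (Suc m)" using t unfolding \<tau>_def by simp
        then have "- (1 / real (Suc m)) \<le> t" using abs_ge_minus_self[of t] by linarith
        then have tm: "- 1 / real (Suc m) \<le> t" by simp
        have "qd e x (- 1 / real (Suc m)) \<le> qd e x t"
        proof (cases "t = - 1 / real (Suc m)")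
          case False then show ?thesis by (intro qmono[OF x True' tS]) (use tm tneg in auto)
        qed simp
        then show ?thesis unfolding umf_def using x True' by simp
      next
        case False
        then show ?thesis unfolding umf_def using qbound[OF e x tS] t by (simp add: abs_le_iff)
      qed
      show ?thesis using lo hi m eq by simp
    qed
  qed
qed

end


context cvxlip
begin

lemma open_shift: "open {x. x + v \<in> S}"
proof -
  have "{x. x + v \<in> S} = (\<lambda>x. x + v) -` S" by auto
  also have "open \<dots>" by (rule continuous_open_vimage[OF opn]) (intro continuous_intros)
  finally show ?thesis .
qed

lemma upf_meas: "upf e n \<in> borel_measurable borel"
proof -
  define c where "c = 1 / real (Suc n)"
  define U where "U = S \<inter> {x. x + c *\<^sub>R e \<in> S}"
  have U: "open U" unfolding U_def using opn open_shift by blast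
  have gc: "continuous_on S g" by (rule convex_on_continuous[OF opn cv])
  have c1: "continuous_on U (\<lambda>x. g (x + c *\<^sub>R e))"
    by (rule continuous_on_compose2[OF gc]) (auto simp: U_def intro!: continuous_intros)
  have c2: "continuous_on U g" using gc by (rule continuous_on_subset) (auto simp: U_def)
  have "continuous_on U (\<lambda>x. qd e x c)" unfolding qd_def
    by (intro continuous_intros c1 c2) (simp add: c_def)
  then have m1: "(\<lambda>x. indicator U x *\<^sub>R qd e x c) \<in> borel_measurable borel"
    using U by (intro borel_measurable_continuous_on_indicator) auto
  have Um[measurable]: "U \<in> sets borel" using U by simp
  have m2: "(\<lambda>x. indicator U x *\<^sub>R qd e x c + (1 - indicator U x) * M) \<in> borel_measurable borel"
    using m1 by measurable
  have "upf e n = (\<lambda>x. indicator U x *\<^sub>R qd e x c + (1 - indicator U x) * M)"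
    unfolding upf_def U_def c_def by (auto simp: indicator_def)
  then show ?thesis using m2 by simp
qed

lemma umf_meas: "umf e n \<in> borel_measurable borel"
proof -
  define c where "c = - 1 / real (Suc n)"
  define U where "U = S \<inter> {x. x + c *\<^sub>R e \<in> S}"
  have U: "open U" unfolding U_def using opn open_shift by blast
  have gc: "continuous_on S g" by (rule convex_on_continuous[OF opn cv])
  have c1: "continuous_on U (\<lambda>x. g (x + c *\<^sub>R e))"
    by (rule continuous_on_compose2[OF gc]) (auto simp: U_def intro!: continuous_intros)
  have c2: "continuous_on U g" using gc by (rule continuous_on_subset) (auto simp: U_def)
  have "continuous_on U (\<lambda>x. qd e x c)" unfolding qd_def
    by (intro continuous_intros c1 c2) (simp add: c_def)
  then have m1: "(\<lambda>x. indicator U x *\<^sub>R qd e x c) \<in> borel_measurable borel"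
    using U by (intro borel_measurable_continuous_on_indicator) auto
  have Um[measurable]: "U \<in> sets borel" using U by simp
  have m2: "(\<lambda>x. indicator U x *\<^sub>R qd e x c + (1 - indicator U x) * (- M)) \<in> borel_measurable borel"
    using m1 by measurable
  have "umf e n = (\<lambda>x. indicator U x *\<^sub>R qd e x c + (1 - indicator U x) * (- M))"
    unfolding umf_def U_def c_def by (auto simp: indicator_def)
  then show ?thesis using m2 by simp
qed

lemma Dp_meas: "Dp e \<in> borel_measurable borel"
  unfolding Dp_def[abs_def] by (rule borel_measurable_cINF_real) (auto intro: upf_meas)

lemma Dm_meas: "norm e = 1 \<Longrightarrow> Dm e \<in> borel_measurable borel"
  unfolding Dm_def[abs_def] by (rule borel_measurable_cSUP) (auto intro: umf_meas bdd_um)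

lemma jump_sum:
  assumes e: "norm e = 1" and T: "finite T"
  shows "T \<noteq> {} \<longrightarrow> (\<forall>t\<in>T. z + t *\<^sub>R e \<in> S) \<longrightarrow>
    (\<Sum>t\<in>T. Dp e (z + t *\<^sub>R e) - Dm e (z + t *\<^sub>R e)) \<le> Dp e (z + Max T *\<^sub>R e) - Dm e (z + Min T *\<^sub>R e)"
  using T
proof (induction T rule: finite_linorder_min_induct)
  case empty then show ?case by simp
next
  case (insert b A)
  show ?case
  proof (intro impI)
    assume mem: "\<forall>t\<in>insert b A. z + t *\<^sub>R e \<in> S"
    show "(\<Sum>t\<in>insert b A. Dp e (z + t *\<^sub>R e) - Dm e (z + t *\<^sub>R e))
        \<le> Dp e (z + Max (insert b A) *\<^sub>R e) - Dm e (z + Min (insert b A) *\<^sub>R e)"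
    proof (cases "A = {}")
      case True then show ?thesis by simp
    next
      case False
      have bA: "b \<notin> A" using insert.hyps(2) by blast
      have IH: "(\<Sum>t\<in>A. Dp e (z + t *\<^sub>R e) - Dm e (z + t *\<^sub>R e)) \<le> Dp e (z + Max A *\<^sub>R e) - Dm e (z + Min A *\<^sub>R e)"
        using insert.IH False mem by auto
      have minA: "Min A \<in> A" using False insert.hyps(1) by simp
      have bmin: "b < Min A" using insert.hyps(2) minA by blast
      have ch: "Dp e (z + b *\<^sub>R e) \<le> Dm e (z + Min A *\<^sub>R e)"
        by (rule chain[OF e]) (use mem minA bmin in auto)
      have maxA: "Max A \<in> A" using False insert.hyps(1) by simp
      have bmax: "b < Max A" using insert.hyps(2) maxA by blast
      have Mx: "Max (insert b A) = Max A"
        using Max_insert[OF insert.hyps(1) False, of b] bmax by simp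
      have Mn: "Min (insert b A) = b"
        using Min_insert[OF insert.hyps(1) False, of b] bmin by simp
      show ?thesis using IH ch bA insert.hyps(1) Mx Mn by simp
    qed
  qed
qed

lemma jump_count:
  assumes e: "norm e = 1" and T: "finite T" and \<eta>: "\<eta> > 0"
    and mem: "\<And>t. t \<in> T \<Longrightarrow> z + t *\<^sub>R e \<in> S \<and> \<eta> \<le> Dp e (z + t *\<^sub>R e) - Dm e (z + t *\<^sub>R e)"
  shows "real (card T) * \<eta> \<le> 2 * M"
proof (cases "T = {}")
  case True then show ?thesis using M0 by simp
next
  case False
  have "real (card T) * \<eta> = (\<Sum>t\<in>T. \<eta>)" by simp
  also have "\<dots> \<le> (\<Sum>t\<in>T. Dp e (z + t *\<^sub>R e) - Dm e (z + t *\<^sub>R e))"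
    using mem by (intro sum_mono) auto
  also have "\<dots> \<le> Dp e (z + Max T *\<^sub>R e) - Dm e (z + Min T *\<^sub>R e)"
    using jump_sum[OF e T, of z] False mem by auto
  also have "\<dots> \<le> M + M"
  proof -
    have "Max T \<in> T" "Min T \<in> T" using T False by auto
    then have "z + Max T *\<^sub>R e \<in> S" "z + Min T *\<^sub>R e \<in> S" using mem by auto
    then have "Dp e (z + Max T *\<^sub>R e) \<le> M" "- M \<le> Dm e (z + Min T *\<^sub>R e)" using Dp_le_M[OF e] by auto
    then show ?thesis by linarith
  qed
  finally show ?thesis by simp
qed

end


lemma ennreal_archimedean_zero:
  fixes a c :: ennreal
  assumes fin: "c < top" and le: "\<And>m::nat. m \<ge> 1 \<Longrightarrow> of_nat m * a \<le> c"
  shows "a = 0"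
proof (rule ccontr)
  assume a0: "a \<noteq> 0"
  have "of_nat 1 * a \<le> c" using le[of 1] by simp
  then have afin: "a < top" using fin by (simp add: le_less_trans)
  obtain a' where a': "a = ennreal a'" "a' \<ge> 0" using afin by (cases a) auto
  obtain c' where c': "c = ennreal c'" "c' \<ge> 0" using fin by (cases c) auto
  have a'pos: "a' > 0" using a0 a' by (auto simp: order_le_less)
  obtain m :: nat where m: "c' / a' < real m" using reals_Archimedean2 by blast
  define m' where "m' = Suc m"
  have "of_nat m' * a \<le> c" using le[of m'] unfolding m'_def by simp
  then have "ennreal (real m' * a') \<le> ennreal c'" using a' c'
    by (simp add: ennreal_mult ennreal_of_nat_eq_real_of_nat)
  then have "real m' * a' \<le> c'" using c' by (simp add: ennreal_le_iff)
  moreover have "c' < real m' * a'" using m a'pos unfolding m'_def by (simp add: field_simps)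
  ultimately show False by simp
qed

context cvxlip
begin

lemma jump_null:
  assumes e: "norm e = 1" and \<eta>: "\<eta> > 0"
  shows "{x\<in>S. \<eta> \<le> Dp e x - Dm e x} \<in> null_sets lborel"
proof -
  define E where "E = {x\<in>S. \<eta> \<le> Dp e x - Dm e x}"
  have [measurable]: "Dp e \<in> borel_measurable borel" "Dm e \<in> borel_measurable borel"
    using Dp_meas Dm_meas[OF e] by auto
  have Sb[measurable]: "S \<in> sets borel" using opn by simp
  have Em[measurable]: "E \<in> sets borel" unfolding E_def by measurable
  define K where "K = 2 * M / \<eta>"
  have part: "E \<inter> ball 0 (real \<rho>) \<in> null_sets lborel" for \<rho> :: nat
  proof -
    define A where "A = E \<inter> ball 0 (real \<rho>)"
    have Am[measurable]: "A \<in> sets borel" unfolding A_def by measurable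
    define B where "B = ball (0::'a) (real \<rho> + 1)"
    have Bm[measurable]: "B \<in> sets borel" unfolding B_def by simp
    have bnd: "of_nat m * emeasure lborel A \<le> ennreal K * emeasure lborel B" if m: "m \<ge> 1" for m :: nat
    proof -
      have "of_nat m * emeasure lborel A = (\<Sum>j<m. emeasure lborel A)" by simp
      also have "\<dots> = (\<Sum>j<m. \<integral>\<^sup>+x. indicator A (x + (real j / real m) *\<^sub>R e) \<partial>lborel)"
        by (intro sum.cong refl) (subst nn_integral_translate, auto)
      also have "\<dots> = (\<integral>\<^sup>+x. (\<Sum>j<m. indicator A (x + (real j / real m) *\<^sub>R e)) \<partial>lborel)"
        by (rule nn_integral_sum[symmetric]) measurable
      also have "\<dots> \<le> (\<integral>\<^sup>+x. ennreal K * indicator B x \<partial>lborel)"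
      proof (rule nn_integral_mono)
        fix x
        define J where "J = {j\<in>{..<m}. x + (real j / real m) *\<^sub>R e \<in> A}"
        have sumJ: "(\<Sum>j<m. indicator A (x + (real j / real m) *\<^sub>R e) :: ennreal) = of_nat (card J)"
        proof -
          have "(\<Sum>j<m. indicator A (x + (real j / real m) *\<^sub>R e) :: ennreal)
              = (\<Sum>j<m. indicator {j. x + (real j / real m) *\<^sub>R e \<in> A} j)"
            by (intro sum.cong refl) (simp add: indicator_def)
          also have "\<dots> = (\<Sum>j\<in>{..<m} \<inter> {j. x + (real j / real m) *\<^sub>R e \<in> A}. 1)"
            by (simp add: sum.inter_restrict indicator_def)
          also have "\<dots> = of_nat (card ({..<m} \<inter> {j. x + (real j / real m) *\<^sub>R e \<in> A}))"
            by simp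
          also have "{..<m} \<inter> {j. x + (real j / real m) *\<^sub>R e \<in> A} = J" unfolding J_def by auto
          finally show ?thesis .
        qed
        show "(\<Sum>j<m. indicator A (x + (real j / real m) *\<^sub>R e)) \<le> ennreal K * indicator B x"
        proof (cases "J = {}")
          case True then show ?thesis using sumJ by simp
        next
          case False
          then obtain j where j: "j \<in> J" by blast
          have jm: "real j / real m < 1" using j m unfolding J_def by auto
          have j0: "0 \<le> real j / real m" by simp
          have "norm (x + (real j / real m) *\<^sub>R e) < real \<rho>" using j unfolding J_def A_def by auto
          moreover have "norm x \<le> norm (x + (real j / real m) *\<^sub>R e) + real j / real m"
            using norm_triangle_ineq4[of "x + (real j / real m) *\<^sub>R e" "(real j / real m) *\<^sub>R e"] e j0
            by simp
          ultimately have "x \<in> B" unfolding B_def using jm by simp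
          then have iB: "indicator B x = (1::ennreal)" by simp
          define T where "T = (\<lambda>j. real j / real m) ` J"
          have inj: "inj_on (\<lambda>j. real j / real m) J" using m by (intro inj_onI) (auto simp: field_simps)
          have cT: "card T = card J" unfolding T_def using inj by (simp add: card_image)
          have fT: "finite T" unfolding T_def J_def by simp
          have "real (card T) * \<eta> \<le> 2 * M"
          proof (rule jump_count[OF e fT \<eta>])
            fix t assume "t \<in> T"
            then obtain i where "i \<in> J" "t = real i / real m" unfolding T_def by blast
            then show "x + t *\<^sub>R e \<in> S \<and> \<eta> \<le> Dp e (x + t *\<^sub>R e) - Dm e (x + t *\<^sub>R e)"
              unfolding J_def A_def E_def by auto
          qed
          then have "real (card J) \<le> K" unfolding K_def using cT \<eta> by (simp add: field_simps)
          then have "of_nat (card J) \<le> ennreal K"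
            by (simp add: ennreal_of_nat_eq_real_of_nat ennreal_leI)
          then show ?thesis using sumJ iB by simp
        qed
      qed
      also have "\<dots> = ennreal K * emeasure lborel B" by (rule nn_integral_cmult_indicator) simp
      finally show ?thesis .
    qed
    have fin: "ennreal K * emeasure lborel B < top"
      unfolding B_def using emeasure_lborel_ball_finite[of "0::'a" "real \<rho> + 1"] by (simp add: ennreal_mult_less_top)
    have "emeasure lborel A = 0" by (rule ennreal_archimedean_zero[OF fin bnd])
    then show ?thesis unfolding A_def[symmetric] by (intro null_setsI) auto
  qed
  have "E = (\<Union>\<rho>::nat. E \<inter> ball 0 (real \<rho>))"
  proof (intro set_eqI iffI)
    fix x assume "x \<in> E"
    obtain n :: nat where "norm x < real n" using reals_Archimedean2 by blast
    then show "x \<in> (\<Union>\<rho>::nat. E \<inter> ball 0 (real \<rho>))" using \<open>x \<in> E\<close> by auto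
  qed auto
  also have "\<dots> \<in> null_sets lborel" using part by blast
  finally show ?thesis unfolding E_def .
qed

lemma ae_diff: "\<exists>N\<in>null_sets lborel. \<forall>x\<in>S - N. g differentiable (at x)"
proof -
  define N where "N = (\<Union>e\<in>Basis. \<Union>k::nat. {x\<in>S. 1 / real (Suc k) \<le> Dp e x - Dm e x})"
  have "N \<in> null_sets lborel" unfolding N_def
    by (intro null_sets_UN' null_sets_UN jump_null) (auto simp: countable_finite)
  moreover have "g differentiable (at x)" if x: "x \<in> S - N" for x
  proof -
    have eq: "Dp e x = Dm e x" if e: "e \<in> Basis" for e
    proof (rule ccontr)
      assume "Dp e x \<noteq> Dm e x"
      then have "Dp e x - Dm e x > 0" using Dm_le_Dp[of e x] e x by auto
      then obtain k where "1 / real (Suc k) < Dp e x - Dm e x"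
        using reals_Archimedean by (metis inverse_eq_divide)
      then have "x \<in> N" unfolding N_def using e x by (auto intro: less_imp_le)
      then show False using x by simp
    qed
    have "(g has_derivative (\<lambda>v. v \<bullet> (\<Sum>i\<in>Basis. Dp i x *\<^sub>R i))) (at x)"
    proof (rule convex_partials_diff[OF cv opn])
      show "x \<in> S" using x by simp
      fix i :: 'a and \<epsilon> :: real assume i: "i \<in> Basis" and \<epsilon>: "\<epsilon> > 0"
      show "\<exists>\<tau>>0. \<forall>t. t \<noteq> 0 \<and> \<bar>t\<bar> < \<tau> \<longrightarrow> \<bar>(g (x + t *\<^sub>R i) - g x) / t - Dp i x\<bar> \<le> \<epsilon>"
        using partial_from_jump[of i x \<epsilon>] i x eq[OF i] \<epsilon> unfolding qd_def by auto
    qed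
    then show ?thesis by (rule differentiableI)
  qed
  ultimately show ?thesis by blast
qed

end


lemma integral_by_slab:
  fixes u :: "'a::euclidean_space \<Rightarrow> ennreal"
  assumes u[measurable]: "u \<in> borel_measurable borel" and v: "norm v = 1" and s: "s > 0"
    and Sh[measurable]: "Sh \<in> sets borel"
    and bnd: "\<And>z F. finite F \<Longrightarrow> (\<Sum>j\<in>F. u (z + (real_of_int j * s) *\<^sub>R v)) \<le> B * indicator Sh z"
  shows "(\<integral>\<^sup>+x. u x \<partial>lborel) \<le> B * emeasure lborel (slab v s \<inter> Sh)"
proof -
  have "(\<integral>\<^sup>+x. u x \<partial>lborel) =
    (\<integral>\<^sup>+z. (\<Sum>n. u (z + (real_of_int (int_decode n) * s) *\<^sub>R v)) * indicator (slab v s) z \<partial>lborel)"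
    by (rule tiling[OF u v s])
  also have "\<dots> \<le> (\<integral>\<^sup>+z. B * indicator (slab v s \<inter> Sh) z \<partial>lborel)"
  proof (rule nn_integral_mono)
    fix z
    have "(\<Sum>n. u (z + (real_of_int (int_decode n) * s) *\<^sub>R v)) \<le> B * indicator Sh z"
      by (rule suminf_int_decode_le[where f = "\<lambda>j. u (z + (real_of_int j * s) *\<^sub>R v)"]) (rule bnd)
    then show "(\<Sum>n. u (z + (real_of_int (int_decode n) * s) *\<^sub>R v)) * indicator (slab v s) z
        \<le> B * indicator (slab v s \<inter> Sh) z"
      by (auto simp: indicator_def)
  qed
  also have "\<dots> = B * emeasure lborel (slab v s \<inter> Sh)"
    by (rule nn_integral_cmult_indicator) measurable
  finally show ?thesis .
qed

lemma measure_by_slab: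
  fixes W :: "'a::euclidean_space set"
  assumes W[measurable]: "W \<in> sets borel" and v: "norm v = 1" and s: "s > 0"
    and Sh[measurable]: "Sh \<in> sets borel"
    and uniq: "\<And>z j k. z + (real_of_int j * s) *\<^sub>R v \<in> W \<Longrightarrow> z + (real_of_int k * s) *\<^sub>R v \<in> W \<Longrightarrow> j = k"
    and insh: "\<And>z j. z + (real_of_int j * s) *\<^sub>R v \<in> W \<Longrightarrow> z \<in> Sh"
  shows "emeasure lborel W \<le> emeasure lborel (slab v s \<inter> Sh)"
proof -
  have "emeasure lborel W = (\<integral>\<^sup>+x. indicator W x \<partial>lborel)" by simp
  also have "\<dots> \<le> 1 * emeasure lborel (slab v s \<inter> Sh)"
  proof (rule integral_by_slab[OF _ v s Sh])
    fix z and F :: "int set" assume F: "finite F"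
    define J where "J = {j\<in>F. z + (real_of_int j * s) *\<^sub>R v \<in> W}"
    have "(\<Sum>j\<in>F. indicator W (z + (real_of_int j * s) *\<^sub>R v) :: ennreal) = (\<Sum>j\<in>J. 1)"
      unfolding J_def using F by (simp add: sum.inter_restrict[symmetric] indicator_def Int_def)
    also have "\<dots> = of_nat (card J)" by simp
    also have "\<dots> \<le> 1 * indicator Sh z"
    proof (cases "J = {}")
      case True then show ?thesis by simp
    next
      case False
      then obtain j where j: "j \<in> J" by blast
      have "J = {j}" using uniq j unfolding J_def by blast
      moreover have "z \<in> Sh" using j insh unfolding J_def by blast
      ultimately show ?thesis by simp
    qed
    finally show "(\<Sum>j\<in>F. indicator W (z + (real_of_int j * s) *\<^sub>R v) :: ennreal) \<le> 1 * indicator Sh z" .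
  qed measurable
  finally show ?thesis by simp
qed

lemma tele3:
  fixes h :: "int \<Rightarrow> real"
  shows "(\<Sum>j\<in>{a..a - 1 + int n}. h (j + 1) - h (j - 2)) =
    h (a + int n) + h (a - 1 + int n) + h (a - 2 + int n) - h a - h (a - 1) - h (a - 2)"
proof (induction n)
  case 0 then show ?case by simp
next
  case (Suc n)
  have "{a..a - 1 + int (Suc n)} = insert (a + int n) {a..a - 1 + int n}" by auto
  then have "(\<Sum>j\<in>{a..a - 1 + int (Suc n)}. h (j + 1) - h (j - 2)) =
      (h (a + int n + 1) - h (a + int n - 2)) + (\<Sum>j\<in>{a..a - 1 + int n}. h (j + 1) - h (j - 2))"
    by simp
  then show ?case using Suc.IH by (simp add: algebra_simps)
qed


lemma line_invariant:
  fixes S :: "'a::real_normed_vector set"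
  assumes S: "open S" "convex S" and z: "\<And>t. z + t *\<^sub>R v \<in> S" and w: "w \<in> S"
  shows "w + t *\<^sub>R v \<in> S"
proof -
  obtain r where r: "r > 0" "ball w r \<subseteq> S" using S(1) w open_contains_ball by blast
  define \<theta> where "\<theta> = min (1/2) (r / (2 * (norm (w - z) + 1)))"
  have p: "r / (2 * (norm (w - z) + 1)) > 0" using r by (intro divide_pos_pos) (auto intro: add_nonneg_pos)
  have \<theta>1: "0 < \<theta>" unfolding \<theta>_def using p by simp
  have \<theta>2: "\<theta> \<le> 1/2" unfolding \<theta>_def by (rule min.cobounded1)
  note \<theta> = \<theta>1 \<theta>2
  define w2 where "w2 = (1 / (1 - \<theta>)) *\<^sub>R (w - \<theta> *\<^sub>R z)"
  have w2w: "w2 - w = (\<theta> / (1 - \<theta>)) *\<^sub>R (w - z)"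
  proof -
    have "(1 / (1 - \<theta>)) *\<^sub>R (w - \<theta> *\<^sub>R z) - w = (1 / (1 - \<theta>) - 1) *\<^sub>R w - (\<theta> / (1 - \<theta>)) *\<^sub>R z"
      by (simp add: algebra_simps)
    also have "1 / (1 - \<theta>) - 1 = \<theta> / (1 - \<theta>)" using \<theta> by (simp add: field_simps)
    finally show ?thesis unfolding w2_def by (simp add: scaleR_diff_right)
  qed
  have "norm (w2 - w) = (\<theta> / (1 - \<theta>)) * norm (w - z)" unfolding w2w using \<theta> by simp
  also have "\<dots> \<le> (2 * \<theta>) * norm (w - z)"
    using \<theta> by (intro mult_right_mono) (auto simp: divide_simps)
  also have "\<dots> < r"
  proof -
    have "\<theta> \<le> r / (2 * (norm (w - z) + 1))" unfolding \<theta>_def by (rule min.cobounded2)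
    then have "2 * \<theta> \<le> 2 * (r / (2 * (norm (w - z) + 1)))" by simp
    also have "\<dots> = r / (norm (w - z) + 1)"
    proof -
      have "norm (w - z) + 1 > 0" by (simp add: add_nonneg_pos)
      then show ?thesis by (simp add: field_simps)
    qed
    finally have "2 * \<theta> \<le> r / (norm (w - z) + 1)" .
    then have "(2 * \<theta>) * norm (w - z) \<le> r / (norm (w - z) + 1) * norm (w - z)"
      by (intro mult_right_mono) auto
    also have "\<dots> < r"
    proof -
      have P: "0 < norm (w - z) + 1" by (simp add: add_nonneg_pos)
      have "norm (w - z) / (norm (w - z) + 1) < 1" using P by simp
      then have "r * (norm (w - z) / (norm (w - z) + 1)) < r * 1" using r by (intro mult_strict_left_mono) auto
      then show ?thesis by simp
    qed
    finally show ?thesis .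
  qed
  finally have "w2 \<in> S" using r by (intro subsetD[OF r(2)]) (simp add: dist_norm norm_minus_commute)
  moreover have "z + (t / \<theta>) *\<^sub>R v \<in> S" by (rule z)
  ultimately have "(1 - \<theta>) *\<^sub>R w2 + \<theta> *\<^sub>R (z + (t / \<theta>) *\<^sub>R v) \<in> S"
    using S(2) \<theta> unfolding convex_def by auto
  moreover have "(1 - \<theta>) *\<^sub>R w2 + \<theta> *\<^sub>R (z + (t / \<theta>) *\<^sub>R v) = w + t *\<^sub>R v"
  proof -
    have a: "(1 - \<theta>) *\<^sub>R w2 = w - \<theta> *\<^sub>R z" unfolding w2_def using \<theta> by simp
    have b: "\<theta> *\<^sub>R (z + (t / \<theta>) *\<^sub>R v) = \<theta> *\<^sub>R z + t *\<^sub>R v" using \<theta> by (simp add: scaleR_add_right)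
    show ?thesis unfolding a b by simp
  qed
  ultimately show ?thesis by simp
qed

lemma all_invariant_UNIV:
  fixes S :: "'a::euclidean_space set"
  assumes ne: "S \<noteq> {}" and inv: "\<And>i w t. i \<in> Basis \<Longrightarrow> w \<in> S \<Longrightarrow> w + t *\<^sub>R i \<in> S"
  shows "S = UNIV"
proof -
  obtain w where w: "w \<in> S" using ne by blast
  have gen: "F \<subseteq> Basis \<longrightarrow> (\<forall>c. w + (\<Sum>i\<in>F. c i *\<^sub>R i) \<in> S)" if F: "finite F" for F
    using F
  proof (induction F rule: finite_induct)
    case empty then show ?case using w by simp
  next
    case (insert i F)
    show ?case
    proof (intro impI allI)
      fix c assume sub: "insert i F \<subseteq> Basis"
      have "w + (\<Sum>i\<in>F. c i *\<^sub>R i) \<in> S" using insert.IH sub by auto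
      then have "(w + (\<Sum>i\<in>F. c i *\<^sub>R i)) + c i *\<^sub>R i \<in> S" using inv sub by auto
      then show "w + (\<Sum>i\<in>insert i F. c i *\<^sub>R i) \<in> S" using insert.hyps by (simp add: algebra_simps)
    qed
  qed
  have "y \<in> S" for y
  proof -
    have "w + (\<Sum>i\<in>Basis. ((y - w) \<bullet> i) *\<^sub>R i) \<in> S" using gen[of Basis] by simp
    then show ?thesis by (simp add: euclidean_representation)
  qed
  then show ?thesis by blast
qed

lemma line_meets_frontier:
  fixes S :: "'a::real_normed_vector set"
  assumes S: "open S" "convex S" and ni: "\<not> (\<forall>w\<in>S. \<forall>t. w + t *\<^sub>R v \<in> S)" and z: "z + t0 *\<^sub>R v \<in> S"
  shows "\<exists>t. z + t *\<^sub>R v \<in> frontier S"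
proof -
  define L where "L = range (\<lambda>t::real. z + t *\<^sub>R v)"
  have cL: "connected L" unfolding L_def
    by (rule connected_continuous_image) (auto intro!: continuous_intros)
  have 1: "L \<inter> S \<noteq> {}" using z unfolding L_def by blast
  have 2: "L - S \<noteq> {}"
  proof
    assume "L - S = {}"
    then have "\<And>t. z + t *\<^sub>R v \<in> S" unfolding L_def by blast
    then have "\<forall>w\<in>S. \<forall>t. w + t *\<^sub>R v \<in> S" using line_invariant[OF S] by blast
    then show False using ni by blast
  qed
  have "L \<inter> frontier S \<noteq> {}" by (rule connected_Int_frontier[OF cL 1 2])
  then show ?thesis unfolding L_def by blast
qed

lemma shadow_open:
  fixes S :: "'a::real_normed_vector set"
  assumes "open S"
  shows "open {z. \<exists>t. z + t *\<^sub>R v \<in> S}"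
proof -
  have "{z. \<exists>t. z + t *\<^sub>R v \<in> S} = (\<Union>t. (\<lambda>z. z + t *\<^sub>R v) -` S)" by auto
  also have "open \<dots>"
    by (intro open_UN ballI continuous_open_vimage[OF assms]) (auto intro!: continuous_intros)
  finally show ?thesis .
qed

lemma shadow_sub:
  fixes S :: "'a::real_normed_vector set"
  assumes S: "open S" "convex S" and ni: "\<not> (\<forall>w\<in>S. \<forall>t. w + t *\<^sub>R v \<in> S)"
    and z: "z \<in> {z. \<exists>t. z + t *\<^sub>R v \<in> S}"
  shows "\<exists>p\<in>frontier S. \<exists>t. z = p + t *\<^sub>R v"
proof -
  obtain t0 where "z + t0 *\<^sub>R v \<in> S" using z by blast
  then obtain t where t: "z + t *\<^sub>R v \<in> frontier S" using line_meets_frontier[OF S ni] by blast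
  have "z = (z + t *\<^sub>R v) + (- t) *\<^sub>R v" by simp
  then show ?thesis using t by blast
qed

lemma noninv_exists:
  fixes S :: "'a::euclidean_space set"
  assumes "S \<noteq> {}" "S \<noteq> UNIV"
  shows "\<exists>j\<in>Basis. \<not> (\<forall>w\<in>S. \<forall>t. w + t *\<^sub>R j \<in> S)"
  using all_invariant_UNIV[of S] assms by blast

lemma ball_in_slab_shadow:
  fixes S :: "'a::euclidean_space set"
  assumes j: "j \<in> Basis" and r: "0 < \<rho>" "\<rho> \<le> 1/2" and c: "c \<bullet> j = 1/2"
    and sub: "\<And>y. y \<in> ball c \<rho> \<Longrightarrow> \<exists>t. y + t *\<^sub>R j \<in> S"
  shows "ball c \<rho> \<subseteq> slab j 1 \<inter> {z. \<exists>t. z + t *\<^sub>R j \<in> S}"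
proof
  fix y assume y: "y \<in> ball c \<rho>"
  have "\<bar>(y - c) \<bullet> j\<bar> \<le> norm (y - c)" using Basis_le_norm[OF j] by blast
  also have "\<dots> < \<rho>" using y by (simp add: dist_norm norm_minus_commute)
  finally have "\<bar>y \<bullet> j - 1/2\<bar> < \<rho>" using c by (simp add: inner_diff_left)
  then have "y \<in> slab j 1" unfolding slab_def using r by auto
  then show "y \<in> slab j 1 \<inter> {z. \<exists>t. z + t *\<^sub>R j \<in> S}" using sub[OF y] by blast
qed

lemma H_pos:
  fixes S :: "'a::euclidean_space set"
  assumes S: "open S" "convex S" "S \<noteq> {}" "S \<noteq> UNIV"
  shows "hausdorff_measure (DIM('a) - 1) (frontier S) > 0"
proof -
  obtain j where j: "j \<in> Basis" and ni: "\<not> (\<forall>w\<in>S. \<forall>t. w + t *\<^sub>R j \<in> S)"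
    using noninv_exists[OF S(3,4)] by blast
  define Sh where "Sh = {z. \<exists>t. z + t *\<^sub>R j \<in> S}"
  have Shb: "Sh \<in> sets borel" unfolding Sh_def using shadow_open[OF S(1)] by simp
  have sh: "emeasure lborel (slab j 1 \<inter> Sh) \<le> ennreal (Kc DIM('a) * 1) * hausdorff_measure (DIM('a) - 1) (frontier S)"
    by (rule shadow) (use j Shb shadow_sub[OF S(1,2) ni] in \<open>auto simp: Sh_def\<close>)
  obtain w where w: "w \<in> S" using S(3) by blast
  obtain r where r: "r > 0" "ball w r \<subseteq> S" using S(1) w open_contains_ball by blast
  define \<rho> where "\<rho> = min r (1/2)"
  define c where "c = w + (1/2 - w \<bullet> j) *\<^sub>R j"
  have \<rho>: "0 < \<rho>" "\<rho> \<le> 1/2" "\<rho> \<le> r" unfolding \<rho>_def using r by auto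
  have cj: "c \<bullet> j = 1/2" unfolding c_def using j by (simp add: inner_add_left)
  have "ball c \<rho> \<subseteq> slab j 1 \<inter> Sh" unfolding Sh_def
  proof (rule ball_in_slab_shadow[OF j \<rho>(1,2) cj])
    fix y assume y: "y \<in> ball c \<rho>"
    have "y + (- (1/2 - w \<bullet> j)) *\<^sub>R j \<in> ball w r"
      using y \<rho> unfolding c_def by (auto simp: dist_norm algebra_simps)
    then show "\<exists>t. y + t *\<^sub>R j \<in> S" using r by blast
  qed
  then have "emeasure lborel (ball c \<rho>) \<le> emeasure lborel (slab j 1 \<inter> Sh)"
    by (intro emeasure_mono) (use Shb in auto)
  moreover have "emeasure lborel (ball c \<rho>) > 0" using \<rho> by (simp add: emeasure_ball)
  ultimately have "0 < ennreal (Kc DIM('a) * 1) * hausdorff_measure (DIM('a) - 1) (frontier S)"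
    using sh by simp
  then show ?thesis by (auto simp: zero_less_iff_neq_zero)
qed

lemma H_top:
  fixes S :: "'a::euclidean_space set"
  assumes S: "open S" "convex S" "S \<noteq> {}" "S \<noteq> UNIV" and i: "i \<in> Basis"
    and inv: "\<And>w t. w \<in> S \<Longrightarrow> w + t *\<^sub>R i \<in> S"
  shows "hausdorff_measure (DIM('a) - 1) (frontier S) = top"
proof -
  obtain j where j: "j \<in> Basis" and ni: "\<not> (\<forall>w\<in>S. \<forall>t. w + t *\<^sub>R j \<in> S)"
    using noninv_exists[OF S(3,4)] by blast
  have ij: "i \<noteq> j" using ni inv by blast
  have ij0: "i \<bullet> j = 0" using i j ij by (simp add: inner_Basis)
  define Sh where "Sh = {z. \<exists>t. z + t *\<^sub>R j \<in> S}"
  have Shb: "Sh \<in> sets borel" unfolding Sh_def using shadow_open[OF S(1)] by simp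
  have sh: "emeasure lborel (slab j 1 \<inter> Sh) \<le> ennreal (Kc DIM('a) * 1) * hausdorff_measure (DIM('a) - 1) (frontier S)"
    by (rule shadow) (use j Shb shadow_sub[OF S(1,2) ni] in \<open>auto simp: Sh_def\<close>)
  obtain w where w: "w \<in> S" using S(3) by blast
  obtain r where r: "r > 0" "ball w r \<subseteq> S" using S(1) w open_contains_ball by blast
  define \<rho> where "\<rho> = min r (1/2)"
  have \<rho>: "0 < \<rho>" "\<rho> \<le> 1/2" "\<rho> \<le> r" unfolding \<rho>_def using r by auto
  define c where "c k = w + (1/2 - w \<bullet> j) *\<^sub>R j + (2 * real k * \<rho>) *\<^sub>R i" for k :: nat
  have cj: "c k \<bullet> j = 1/2" for k unfolding c_def using j ij0 by (simp add: inner_add_left)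
  have sub: "ball (c k) \<rho> \<subseteq> slab j 1 \<inter> Sh" for k unfolding Sh_def
  proof (rule ball_in_slab_shadow[OF j \<rho>(1,2) cj])
    fix y assume y: "y \<in> ball (c k) \<rho>"
    have "y + (- (2 * real k * \<rho>)) *\<^sub>R i + (- (1/2 - w \<bullet> j)) *\<^sub>R j \<in> ball w r"
      using y \<rho> unfolding c_def by (auto simp: dist_norm algebra_simps)
    then have "y + (- (2 * real k * \<rho>)) *\<^sub>R i + (- (1/2 - w \<bullet> j)) *\<^sub>R j \<in> S" using r by blast
    then have "(y + (- (2 * real k * \<rho>)) *\<^sub>R i + (- (1/2 - w \<bullet> j)) *\<^sub>R j) + (2 * real k * \<rho>) *\<^sub>R i \<in> S"
      by (rule inv)
    then have "y + (- (1/2 - w \<bullet> j)) *\<^sub>R j \<in> S" by (simp add: algebra_simps)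
    then show "\<exists>t. y + t *\<^sub>R j \<in> S" by blast
  qed
  have disj: "disjoint_family (\<lambda>k. ball (c k) \<rho>)"
    unfolding disjoint_family_on_def
  proof (intro ballI impI)
    fix k l :: nat assume kl: "k \<noteq> l"
    show "ball (c k) \<rho> \<inter> ball (c l) \<rho> = {}"
    proof (rule ccontr)
      assume "ball (c k) \<rho> \<inter> ball (c l) \<rho> \<noteq> {}"
      then obtain y where "dist (c k) y < \<rho>" "dist (c l) y < \<rho>" by auto
      moreover have "dist (c k) (c l) \<le> dist (c k) y + dist y (c l)" by (rule dist_triangle)
      ultimately have "dist (c k) (c l) < 2 * \<rho>" by (simp add: dist_commute)
      moreover have "dist (c k) (c l) = 2 * \<rho> * \<bar>real k - real l\<bar>"
      proof -
        have "c k - c l = (2 * \<rho> * (real k - real l)) *\<^sub>R i" unfolding c_def by (simp add: algebra_simps)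
        then show ?thesis using i \<rho> by (simp add: dist_norm abs_mult)
      qed
      moreover have "1 \<le> \<bar>real k - real l\<bar>" using kl by linarith
      ultimately show False using \<rho> by (smt (verit) mult_le_cancel_left1)
    qed
  qed
  have eqm: "emeasure lborel (ball (c k) \<rho>) = emeasure lborel (ball (0::'a) \<rho>)" for k
    using \<rho> by (simp add: emeasure_ball[OF less_imp_le[OF \<rho>(1)]])
  have pos: "emeasure lborel (ball (0::'a) \<rho>) \<noteq> 0"
  proof -
    have u: "unit_ball_vol (real DIM('a)) > 0" by (rule unit_ball_vol_pos) simp
    have u': "unit_ball_vol (real DIM('a)) \<noteq> 0" using u by linarith
    show ?thesis using \<rho> u' by (simp add: emeasure_ball[OF less_imp_le[OF \<rho>(1)]])
  qed
  have "(\<Sum>k. emeasure lborel (ball (c k) \<rho>)) = emeasure lborel (\<Union>k. ball (c k) \<rho>)"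
    by (rule suminf_emeasure) (use disj in auto)
  also have "\<dots> \<le> emeasure lborel (slab j 1 \<inter> Sh)"
    using sub Shb by (intro emeasure_mono) auto
  finally have le: "(\<Sum>k. emeasure lborel (ball (0::'a) \<rho>)) \<le> emeasure lborel (slab j 1 \<inter> Sh)"
    using eqm by simp
  have "emeasure lborel (slab j 1 \<inter> Sh) = top"
  proof (rule ccontr)
    assume nt: "emeasure lborel (slab j 1 \<inter> Sh) \<noteq> top"
    have "emeasure lborel (ball (0::'a) \<rho>) = 0"
    proof (rule ennreal_archimedean_zero)
      show "emeasure lborel (slab j 1 \<inter> Sh) < top" using nt by (simp add: less_top)
      fix m :: nat
      have "of_nat m * emeasure lborel (ball (0::'a) \<rho>) = (\<Sum>k<m. emeasure lborel (ball (0::'a) \<rho>))" by simp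
      also have "\<dots> \<le> (\<Sum>k. emeasure lborel (ball (0::'a) \<rho>))" by (rule sum_le_suminf) auto
      finally show "of_nat m * emeasure lborel (ball (0::'a) \<rho>) \<le> emeasure lborel (slab j 1 \<inter> Sh)"
        using le by simp
    qed
    then show False using pos by simp
  qed
  then have "ennreal (Kc DIM('a) * 1) * hausdorff_measure (DIM('a) - 1) (frontier S) = top"
    using sh by (simp add: top_unique)
  then show ?thesis by (simp add: ennreal_mult_eq_top_iff)
qed


lemma convex_shift: "convex S \<Longrightarrow> convex {x. x + c \<in> S}"
proof -
  assume S: "convex S"
  have "{x. x + c \<in> S} = (\<lambda>x. x + (- c)) ` S" by (auto intro: image_eqI[where x="_ + c"])
  then show ?thesis using convex_translation[OF S, of "- c"] by (simp add: add.commute)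
qed

lemma line_between_convex:
  fixes A :: "'a::real_vector set"
  assumes A: "convex A" and "z + a *\<^sub>R v \<in> A" "z + b *\<^sub>R v \<in> A" "a \<le> t" "t \<le> b"
  shows "z + t *\<^sub>R v \<in> A"
proof -
  have "convex_on A (\<lambda>_. 0::real)" using A by (simp add: convex_on_const)
  then have "convex {t. z + t *\<^sub>R v \<in> A}"
    using convex_on_imp_convex[OF convex_on_line, of A "\<lambda>_. 0::real" z v] by blast
  then show ?thesis using real_convex_between[of "{t. z + t *\<^sub>R v \<in> A}" a b t] assms by auto
qed

definition Aset :: "'a::euclidean_space set \<Rightarrow> real \<Rightarrow> 'a set" where
  "Aset S R = {x\<in>S. \<forall>i\<in>Basis. x + (2*R) *\<^sub>R i \<in> S \<and> x + (-2*R) *\<^sub>R i \<in> S}"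

lemma Aset_convex: "convex S \<Longrightarrow> convex (Aset S R)"
proof -
  assume S: "convex S"
  have "Aset S R = S \<inter> (\<Inter>i\<in>Basis. {x. x + (2*R) *\<^sub>R i \<in> S} \<inter> {x. x + (-2*R) *\<^sub>R i \<in> S})"
    unfolding Aset_def by auto
  also have "convex \<dots>" using S by (intro convex_Int convex_INT ballI convex_shift)
  finally show ?thesis .
qed

lemma Aset_open: "open S \<Longrightarrow> open (Aset S R)"
proof -
  assume S: "open S"
  have o: "open {x. x + c \<in> S}" for c :: 'a
  proof -
    have "{x. x + c \<in> S} = (\<lambda>x. x + c) -` S" by auto
    also have "open \<dots>" by (rule continuous_open_vimage[OF S]) (intro continuous_intros)
    finally show ?thesis .
  qed
  have "Aset S R = S \<inter> (\<Inter>i\<in>Basis. {x. x + (2*R) *\<^sub>R i \<in> S} \<inter> {x. x + (-2*R) *\<^sub>R i \<in> S})"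
    unfolding Aset_def by auto
  also have "open \<dots>" by (intro open_Int open_INT ballI o finite_Basis S)
  finally show ?thesis .
qed

lemma line_G_sum:
  fixes g :: "'a::euclidean_space \<Rightarrow> real"
  assumes cv: "convex_on S g" and M0: "M \<ge> 0"
    and Lip: "\<And>a b. a \<in> S \<Longrightarrow> b \<in> S \<Longrightarrow> \<bar>g a - g b\<bar> \<le> M * dist a b"
    and R: "R > 0" and i: "i \<in> Basis" and F: "finite F"
  shows "(\<Sum>j\<in>F. indicator (Aset S R) (z + (real_of_int j * R) *\<^sub>R i) * Gfun g R i (z + (real_of_int j * R) *\<^sub>R i)) \<le> 6 * M * R"
proof -
  have cS: "convex S" using cv convex_on_imp_convex by blast
  have cA: "convex (Aset S R)" by (rule Aset_convex[OF cS])
  define p where "p l = z + (real_of_int l * R) *\<^sub>R i" for l :: int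
  define J where "J = {j\<in>F. p j \<in> Aset S R}"
  have ni: "norm i = 1" using i by simp
  have "(\<Sum>j\<in>F. indicator (Aset S R) (p j) * Gfun g R i (p j)) = (\<Sum>j\<in>J. Gfun g R i (p j))"
    unfolding J_def using F by (simp add: sum.inter_restrict[symmetric] indicator_def Int_def)
  also have "\<dots> \<le> 6 * M * R"
  proof (cases "J = {}")
    case True then show ?thesis using M0 R by simp
  next
    case False
    have fJ: "finite J" unfolding J_def using F by simp
    define a where "a = Min J"
    define b where "b = Max J"
    have aJ: "a \<in> J" and bJ: "b \<in> J" unfolding a_def b_def using fJ False by auto
    have Jab: "J \<subseteq> {a..b}" unfolding a_def b_def using fJ by auto
    have pa: "p a \<in> Aset S R" and pb: "p b \<in> Aset S R" using aJ bJ unfolding J_def by auto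
    have inA: "p j \<in> Aset S R" if "j \<in> {a..b}" for j
      using line_between_convex[OF cA, of z "real_of_int a * R" i "real_of_int b * R" "real_of_int j * R"]
        pa pb that R unfolding p_def by (auto intro: mult_right_mono)
    have pshift: "p l + c *\<^sub>R i = z + (real_of_int l * R + c) *\<^sub>R i" for l c
      unfolding p_def by (simp add: algebra_simps)
    have lo: "z + (real_of_int (a - 2) * R) *\<^sub>R i \<in> S"
      using pa unfolding Aset_def using i pshift[of a "-2*R"] by (auto simp: algebra_simps)
    have hi: "z + (real_of_int (b + 2) * R) *\<^sub>R i \<in> S"
      using pb unfolding Aset_def using i pshift[of b "2*R"] by (auto simp: algebra_simps)
    have inS: "p l \<in> S" if "a - 2 \<le> l" "l \<le> b + 2" for l
      unfolding p_def
      by (rule line_between_convex[OF cS lo hi]) (use that R in \<open>auto intro: mult_right_mono\<close>)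
    have ab: "a \<le> b" using aJ Jab by auto
    define h where "h l = g (p (l + 1)) - g (p l)" for l
    have hb: "\<bar>h l\<bar> \<le> M * R" if "a - 2 \<le> l" "l \<le> b + 1" for l
    proof -
      have "\<bar>h l\<bar> \<le> M * dist (p (l + 1)) (p l)" unfolding h_def by (rule Lip) (use inS that in auto)
      also have "dist (p (l + 1)) (p l) = R" unfolding p_def using R ni by (simp add: dist_norm algebra_simps)
      finally show ?thesis .
    qed
    have Gh: "Gfun g R i (p j) = h (j + 1) - h (j - 2)" for j
    proof -
      have e1: "p j + (2*R) *\<^sub>R i = p (j + 2)" unfolding p_def by (simp add: algebra_simps)
      have e2: "p j + R *\<^sub>R i = p (j + 1)" unfolding p_def by (simp add: algebra_simps)
      have e3: "p j + (-R) *\<^sub>R i = p (j - 1)" unfolding p_def by (simp add: algebra_simps)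
      have e4: "p j + (-2*R) *\<^sub>R i = p (j - 2)" unfolding p_def by (simp add: algebra_simps)
      show ?thesis unfolding Gfun_def e1 e2 e3 e4 h_def by (simp add: add.commute)
    qed
    have Gnn: "0 \<le> Gfun g R i (p j)" if "j \<in> {a..b}" for j
      using Gfun_nonneg[OF cv R] inA[OF that] i unfolding Aset_def by auto
    have "(\<Sum>j\<in>J. Gfun g R i (p j)) \<le> (\<Sum>j\<in>{a..b}. Gfun g R i (p j))"
      by (rule sum_mono2) (use Jab Gnn in auto)
    also have "\<dots> = (\<Sum>j\<in>{a..a - 1 + int (nat (b - a + 1))}. h (j + 1) - h (j - 2))"
      using ab Gh by simp
    also have "\<dots> = h (a + int (nat (b - a + 1))) + h (a - 1 + int (nat (b - a + 1))) + h (a - 2 + int (nat (b - a + 1)))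
        - h a - h (a - 1) - h (a - 2)" by (rule tele3)
    also have "\<dots> = h (b + 1) + h b + h (b - 1) - h a - h (a - 1) - h (a - 2)" using ab by simp
    also have "\<dots> \<le> 6 * (M * R)"
      using hb[of "b + 1"] hb[of b] hb[of "b - 1"] hb[of a] hb[of "a - 1"] hb[of "a - 2"] ab
      by (simp add: abs_le_iff)
    finally show ?thesis by simp
  qed
  finally show ?thesis unfolding p_def .
qed


lemma G_integral:
  fixes g :: "'a::euclidean_space \<Rightarrow> real"
  assumes cv: "convex_on S g" and S: "open S" and M0: "M \<ge> 0"
    and Lip: "\<And>a b. a \<in> S \<Longrightarrow> b \<in> S \<Longrightarrow> \<bar>g a - g b\<bar> \<le> M * dist a b"
    and R: "R > 0" and i: "i \<in> Basis" and ni: "\<not> (\<forall>w\<in>S. \<forall>t. w + t *\<^sub>R i \<in> S)"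
  shows "(\<integral>\<^sup>+x. ennreal (indicator (Aset S R) x * Gfun g R i x) \<partial>lborel)
    \<le> ennreal (6 * M * R) * (ennreal (Kc DIM('a) * R) * hausdorff_measure (DIM('a) - 1) (frontier S))"
proof -
  have cS: "convex S" using cv convex_on_imp_convex by blast
  define A where "A = Aset S R"
  have Ao: "open A" unfolding A_def by (rule Aset_open[OF S])
  have gc: "continuous_on S g" by (rule convex_on_continuous[OF S cv])
  have memc: "x + c *\<^sub>R i \<in> S" if x: "x \<in> A" and c: "-2*R \<le> c" "c \<le> 2*R" for x c
  proof -
    have "x + (-2*R) *\<^sub>R i \<in> S" "x + (2*R) *\<^sub>R i \<in> S" using x i unfolding A_def Aset_def by auto
    then show ?thesis using line_between_convex[OF cS, of x "-2*R" i "2*R" c] c by auto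
  qed
  have cc: "continuous_on A (\<lambda>x. g (x + c *\<^sub>R i))" if c: "-2*R \<le> c" "c \<le> 2*R" for c
    by (rule continuous_on_compose2[OF gc]) (auto intro!: continuous_intros memc c)
  have "continuous_on A (Gfun g R i)" unfolding Gfun_def[abs_def]
    using R by (intro continuous_intros cc) auto
  then have m1: "(\<lambda>x. indicator A x *\<^sub>R Gfun g R i x) \<in> borel_measurable borel"
    using Ao by (intro borel_measurable_continuous_on_indicator) auto
  have um: "(\<lambda>x. ennreal (indicator A x * Gfun g R i x)) \<in> borel_measurable borel"
    using m1 by (simp add: measurable_compose[OF _ measurable_ennreal])
  define Sh where "Sh = {z. \<exists>t. z + t *\<^sub>R i \<in> S}"
  have Shb: "Sh \<in> sets borel" unfolding Sh_def using shadow_open[OF S] by simp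
  have nn: "0 \<le> indicator A x * Gfun g R i x" for x
    using Gfun_nonneg[OF cv R, of x i] i unfolding A_def Aset_def by (auto simp: indicator_def)
  have "(\<integral>\<^sup>+x. ennreal (indicator A x * Gfun g R i x) \<partial>lborel) \<le> ennreal (6 * M * R) * emeasure lborel (slab i R \<inter> Sh)"
  proof (rule integral_by_slab[OF um _ R Shb])
    show "norm i = 1" using i by simp
    fix z and F :: "int set" assume F: "finite F"
    have "(\<Sum>j\<in>F. ennreal (indicator A (z + (real_of_int j * R) *\<^sub>R i) * Gfun g R i (z + (real_of_int j * R) *\<^sub>R i)))
        = ennreal (\<Sum>j\<in>F. indicator A (z + (real_of_int j * R) *\<^sub>R i) * Gfun g R i (z + (real_of_int j * R) *\<^sub>R i))"
      using nn by (simp add: sum_ennreal)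
    also have "\<dots> \<le> ennreal (6 * M * R) * indicator Sh z"
    proof (cases "z \<in> Sh")
      case True
      have "(\<Sum>j\<in>F. indicator A (z + (real_of_int j * R) *\<^sub>R i) * Gfun g R i (z + (real_of_int j * R) *\<^sub>R i)) \<le> 6 * M * R"
        unfolding A_def by (rule line_G_sum[OF cv M0 Lip R i F])
      then show ?thesis using True by (simp add: ennreal_leI)
    next
      case False
      have "indicator A (z + (real_of_int j * R) *\<^sub>R i) = (0::real)" for j
        using False unfolding Sh_def A_def Aset_def by (auto simp: indicator_def)
      then show ?thesis by simp
    qed
    finally show "(\<Sum>j\<in>F. ennreal (indicator A (z + (real_of_int j * R) *\<^sub>R i) * Gfun g R i (z + (real_of_int j * R) *\<^sub>R i)))
        \<le> ennreal (6 * M * R) * indicator Sh z" .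
  qed
  also have "\<dots> \<le> ennreal (6 * M * R) * (ennreal (Kc DIM('a) * R) * hausdorff_measure (DIM('a) - 1) (frontier S))"
  proof (rule mult_left_mono)
    show "emeasure lborel (slab i R \<inter> Sh) \<le> ennreal (Kc DIM('a) * R) * hausdorff_measure (DIM('a) - 1) (frontier S)"
      by (rule shadow) (use i R Shb shadow_sub[OF S cS ni] in \<open>auto simp: Sh_def\<close>)
  qed simp
  finally show ?thesis unfolding A_def .
qed

lemma layer_measure:
  fixes S :: "'a::euclidean_space set"
  assumes S: "open S" "convex S" and v: "norm v = 1" and s: "s > 0"
    and ni: "\<not> (\<forall>w\<in>S. \<forall>t. w + t *\<^sub>R v \<in> S)"
  shows "emeasure lborel {x\<in>S. x + s *\<^sub>R v \<notin> S} \<le> ennreal (Kc DIM('a) * s) * hausdorff_measure (DIM('a) - 1) (frontier S)"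
proof -
  define W where "W = {x\<in>S. x + s *\<^sub>R v \<notin> S}"
  have cl: "closed {x. x + s *\<^sub>R v \<notin> S}"
  proof -
    have "{x. x + s *\<^sub>R v \<notin> S} = - ((\<lambda>x. x + s *\<^sub>R v) -` S)" by auto
    moreover have "open ((\<lambda>x. x + s *\<^sub>R v) -` S)" by (rule continuous_open_vimage[OF S(1)]) (intro continuous_intros)
    ultimately show ?thesis by (simp add: closed_def)
  qed
  have Wb: "W \<in> sets borel"
  proof -
    have "W = S \<inter> {x. x + s *\<^sub>R v \<notin> S}" unfolding W_def by auto
    then show ?thesis using S(1) cl by simp
  qed
  define Sh where "Sh = {z. \<exists>t. z + t *\<^sub>R v \<in> S}"
  have Shb: "Sh \<in> sets borel" unfolding Sh_def using shadow_open[OF S(1)] by simp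
  have "emeasure lborel W \<le> emeasure lborel (slab v s \<inter> Sh)"
  proof (rule measure_by_slab[OF Wb v s Shb])
    fix z j k assume j: "z + (real_of_int j * s) *\<^sub>R v \<in> W" and k: "z + (real_of_int k * s) *\<^sub>R v \<in> W"
    have lt: False if jk: "j' < k'" and j': "z + (real_of_int j' * s) *\<^sub>R v \<in> W"
        and k': "z + (real_of_int k' * s) *\<^sub>R v \<in> W" for j' k'
    proof -
      have "z + (real_of_int (j' + 1) * s) *\<^sub>R v \<in> S"
        by (rule line_between_convex[OF S(2), of z "real_of_int j' * s" v "real_of_int k' * s"])
           (use j' k' jk s in \<open>auto simp: W_def intro: mult_right_mono\<close>)
      moreover have "z + (real_of_int (j' + 1) * s) *\<^sub>R v = (z + (real_of_int j' * s) *\<^sub>R v) + s *\<^sub>R v"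
        by (simp add: algebra_simps)
      ultimately have "(z + (real_of_int j' * s) *\<^sub>R v) + s *\<^sub>R v \<in> S" by metis
      then show False using j' unfolding W_def by blast
    qed
    show "j = k" using lt[OF _ j k] lt[OF _ k j] by (meson linorder_neqE)
  next
    fix z j assume "z + (real_of_int j * s) *\<^sub>R v \<in> W"
    then show "z \<in> Sh" unfolding W_def Sh_def by blast
  qed
  also have "\<dots> \<le> ennreal (Kc DIM('a) * s) * hausdorff_measure (DIM('a) - 1) (frontier S)"
    by (rule shadow) (use v s Shb shadow_sub[OF S ni] in \<open>auto simp: Sh_def\<close>)
  finally show ?thesis unfolding W_def .
qed

lemma volume_bound:
  fixes S :: "'a::euclidean_space set"
  assumes S: "open S" "convex S" "bounded S" and D: "diameter S > 0" and i: "i \<in> Basis"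
    and ni: "\<not> (\<forall>w\<in>S. \<forall>t. w + t *\<^sub>R i \<in> S)"
  shows "emeasure lborel S \<le> ennreal (Kc DIM('a) * (2 * diameter S)) * hausdorff_measure (DIM('a) - 1) (frontier S)"
proof -
  define s where "s = 2 * diameter S"
  have s: "s > 0" unfolding s_def using D by simp
  have v: "norm i = 1" using i by simp
  have Sb: "S \<in> sets borel" using S(1) by simp
  define Sh where "Sh = {z. \<exists>t. z + t *\<^sub>R i \<in> S}"
  have Shb: "Sh \<in> sets borel" unfolding Sh_def using shadow_open[OF S(1)] by simp
  have "emeasure lborel S \<le> emeasure lborel (slab i s \<inter> Sh)"
  proof (rule measure_by_slab[OF Sb v s Shb])
    fix z j k assume j: "z + (real_of_int j * s) *\<^sub>R i \<in> S" and k: "z + (real_of_int k * s) *\<^sub>R i \<in> S"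
    have "dist (z + (real_of_int j * s) *\<^sub>R i) (z + (real_of_int k * s) *\<^sub>R i) \<le> diameter S"
      by (rule diameter_bounded_bound[OF S(3) j k])
    moreover have "dist (z + (real_of_int j * s) *\<^sub>R i) (z + (real_of_int k * s) *\<^sub>R i) = \<bar>real_of_int j - real_of_int k\<bar> * s"
    proof -
      have "(z + (real_of_int j * s) *\<^sub>R i) - (z + (real_of_int k * s) *\<^sub>R i) = ((real_of_int j - real_of_int k) * s) *\<^sub>R i"
        by (simp add: algebra_simps)
      then show ?thesis using v s by (simp add: dist_norm abs_mult)
    qed
    ultimately have "\<bar>real_of_int j - real_of_int k\<bar> * (2 * diameter S) \<le> diameter S" unfolding s_def by simp
    then have "\<bar>real_of_int j - real_of_int k\<bar> * 2 \<le> 1" using D by (simp add: mult.assoc[symmetric] mult_le_cancel_right1)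
    then have "\<bar>real_of_int (j - k)\<bar> < 1" by simp
    then have "\<bar>j - k\<bar> < 1" by (metis of_int_abs of_int_less_1_iff)
    then show "j = k" by (simp add: abs_less_iff)
  next
    fix z j assume "z + (real_of_int j * s) *\<^sub>R i \<in> S"
    then show "z \<in> Sh" unfolding Sh_def by blast
  qed
  also have "\<dots> \<le> ennreal (Kc DIM('a) * s) * hausdorff_measure (DIM('a) - 1) (frontier S)"
    by (rule shadow) (use v s Shb shadow_sub[OF S(1,2) ni] in \<open>auto simp: Sh_def\<close>)
  finally show ?thesis unfolding s_def .
qed


lemma G_meas:
  fixes g :: "'a::euclidean_space \<Rightarrow> real"
  assumes cv: "convex_on S g" and S: "open S" and R: "R > 0" and i: "i \<in> Basis"
  shows "(\<lambda>x. ennreal (indicator (Aset S R) x * Gfun g R i x)) \<in> borel_measurable borel"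
proof -
  have cS: "convex S" using cv convex_on_imp_convex by blast
  define A where "A = Aset S R"
  have Ao: "open A" unfolding A_def by (rule Aset_open[OF S])
  have gc: "continuous_on S g" by (rule convex_on_continuous[OF S cv])
  have memc: "x + c *\<^sub>R i \<in> S" if x: "x \<in> A" and c: "-2*R \<le> c" "c \<le> 2*R" for x c
  proof -
    have "x + (-2*R) *\<^sub>R i \<in> S" "x + (2*R) *\<^sub>R i \<in> S" using x i unfolding A_def Aset_def by auto
    then show ?thesis using line_between_convex[OF cS, of x "-2*R" i "2*R" c] c by auto
  qed
  have cc: "continuous_on A (\<lambda>x. g (x + c *\<^sub>R i))" if c: "-2*R \<le> c" "c \<le> 2*R" for c
    by (rule continuous_on_compose2[OF gc]) (auto intro!: continuous_intros memc c)
  have "continuous_on A (Gfun g R i)" unfolding Gfun_def[abs_def]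
    using R by (intro continuous_intros cc) auto
  then have m1: "(\<lambda>x. indicator A x *\<^sub>R Gfun g R i x) \<in> borel_measurable borel"
    using Ao by (intro borel_measurable_continuous_on_indicator) auto
  show ?thesis unfolding A_def[symmetric]
    using m1 by (simp add: measurable_compose[OF _ measurable_ennreal])
qed

lemma convex_on_affine_inner:
  fixes w :: "'a::real_inner"
  assumes "convex S"
  shows "convex_on S (\<lambda>x. c + x \<bullet> w)"
  unfolding convex_on_def
proof (intro conjI assms ballI allI impI)
  fix x y :: 'a and u v :: real assume "u + v = 1"
  then have "c + (u *\<^sub>R x + v *\<^sub>R y) \<bullet> w = u * (c + x \<bullet> w) + v * (c + y \<bullet> w)"
  proof -
    have "c + (u *\<^sub>R x + v *\<^sub>R y) \<bullet> w = (u + v) * c + u * (x \<bullet> w) + v * (y \<bullet> w)"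
      using \<open>u + v = 1\<close> by (simp add: inner_add_left)
    also have "\<dots> = u * (c + x \<bullet> w) + v * (c + y \<bullet> w)" by (simp add: algebra_simps)
    finally show ?thesis .
  qed
  then show "c + (u *\<^sub>R x + v *\<^sub>R y) \<bullet> w \<le> u * (c + x \<bullet> w) + v * (c + y \<bullet> w)" by simp
qed

lemma f_deriv:
  fixes g :: "'a::euclidean_space \<Rightarrow> real"
  assumes fdef: "\<And>y. f y = g y - \<mu> / 2 * (norm (y - x0))\<^sup>2" and Dg: "(g has_derivative Dg) (at x)"
  shows "(f has_derivative (\<lambda>v. Dg v - \<mu> * ((x - x0) \<bullet> v))) (at x)"
proof -
  have fe: "f = (\<lambda>y. g y - \<mu> / 2 * ((y - x0) \<bullet> (y - x0)))"
    by (rule ext) (simp add: fdef power2_norm_eq_inner)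
  have d1: "((\<lambda>y. y - x0) has_derivative (\<lambda>v. v - 0)) (at x)"
    by (rule has_derivative_diff[OF has_derivative_ident has_derivative_const])
  have d2: "((\<lambda>y. (y - x0) \<bullet> (y - x0)) has_derivative (\<lambda>h. (x - x0) \<bullet> (h - 0) + (h - 0) \<bullet> (x - x0))) (at x)"
    by (rule has_derivative_inner[OF d1 d1])
  have d3: "((\<lambda>y. \<mu> / 2 * ((y - x0) \<bullet> (y - x0))) has_derivative (\<lambda>h. \<mu> / 2 * ((x - x0) \<bullet> (h - 0) + (h - 0) \<bullet> (x - x0)))) (at x)"
    by (rule has_derivative_mult_right[OF d2])
  have d4: "((\<lambda>y. g y - \<mu> / 2 * ((y - x0) \<bullet> (y - x0))) has_derivative
      (\<lambda>h. Dg h - \<mu> / 2 * ((x - x0) \<bullet> (h - 0) + (h - 0) \<bullet> (x - x0)))) (at x)"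
    by (rule has_derivative_diff[OF Dg d3])
  have e: "(\<lambda>h. Dg h - \<mu> / 2 * ((x - x0) \<bullet> (h - 0) + (h - 0) \<bullet> (x - x0))) = (\<lambda>v. Dg v - \<mu> * ((x - x0) \<bullet> v))"
    by (rule ext) (simp add: inner_commute)
  show ?thesis unfolding fe using d4 unfolding e .
qed


lemma pointwise_bound:
  fixes g f :: "'a::euclidean_space \<Rightarrow> real"
  assumes cvg: "convex_on S g" and S: "open S" and M0: "M \<ge> 0"
    and Lipg: "\<And>a b. a \<in> S \<Longrightarrow> b \<in> S \<Longrightarrow> \<bar>g a - g b\<bar> \<le> M * dist a b"
    and x: "x \<in> S" and Dg: "(g has_derivative Dg) (at x)" and r: "r > 0" and mu: "\<mu> \<ge> 0"
    and fdef: "\<And>y. f y = g y - \<mu> / 2 * (norm (y - x0))\<^sup>2"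
    and y: "y \<in> ball x r \<inter> S"
  shows "ennreal \<bar>f y - (f x + (if f differentiable (at x) then frechet_derivative f (at x) (y - x) else 0))\<bar>
    \<le> ennreal (indicator (Aset S (real DIM('a) * r)) x * (\<Sum>i\<in>Basis. Gfun g (real DIM('a) * r) i x))
       + ennreal (2 * M * r) * indicator (S - Aset S (real DIM('a) * r)) x + ennreal (\<mu> * r\<^sup>2 / 2) * indicator S x"
proof -
  define R where "R = real DIM('a) * r"
  have R: "R > 0" unfolding R_def using r by simp
  define Df where "Df = (\<lambda>v. Dg v - \<mu> * ((x - x0) \<bullet> v))"
  have fD: "(f has_derivative Df) (at x)" unfolding Df_def by (rule f_deriv[OF fdef Dg])
  have fdiff: "f differentiable (at x)" using fD by (rule differentiableI)
  have fr: "frechet_derivative f (at x) = Df" using frechet_derivative_at[OF fD] by simp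
  define v where "v = y - x"
  have yS: "y \<in> S" using y by simp
  have nv: "norm v < r" using y unfolding v_def by (simp add: dist_norm norm_minus_commute)
  have yv: "y = x + v" unfolding v_def by simp
  define eg where "eg = g y - g x - Dg v"
  have eq: "f y - (f x + Df v) = eg - \<mu> / 2 * (norm v)\<^sup>2"
  proof -
    have nid: "(norm (y - x0))\<^sup>2 = (norm v)\<^sup>2 + 2 * ((x - x0) \<bullet> v) + (norm (x - x0))\<^sup>2"
    proof -
      have gen: "(norm (a + b))\<^sup>2 = (norm a)\<^sup>2 + 2 * (b \<bullet> a) + (norm b)\<^sup>2" for a b :: 'a
        by (simp add: power2_norm_eq_inner inner_add_left inner_add_right inner_commute)
      have "y - x0 = v + (x - x0)" unfolding v_def by simp
      then show ?thesis using gen[of v "x - x0"] by (simp only:)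
    qed
    show ?thesis by (simp only: fdef eg_def Df_def nid) (simp add: algebra_simps inner_diff_left)
  qed
  have eg0: "0 \<le> eg" using grad_ineq[OF cvg x yS Dg] unfolding eg_def v_def by simp
  define bd where "bd = (if x \<in> Aset S R then (\<Sum>i\<in>Basis. Gfun g R i x) else 2 * M * r)"
  have egb: "eg \<le> bd"
  proof (cases "x \<in> Aset S R")
    case True
    have pts: "x + (2*R) *\<^sub>R i \<in> S \<and> x + (-2*R) *\<^sub>R i \<in> S" if "i \<in> Basis" for i
      using True that unfolding Aset_def by auto
    have vb: "real DIM('a) * norm v \<le> R" unfolding R_def using nv by (intro mult_left_mono) auto
    have "g (x + v) - g x - Dg v \<le> (\<Sum>i\<in>Basis. Gfun g R i x)"
      by (rule err_bound_G[OF cvg x Dg R pts vb])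
    then show ?thesis unfolding eg_def bd_def using True yv by simp
  next
    case False
    have "\<bar>g y - g x\<bar> \<le> M * norm v" using Lipg[OF yS x] unfolding v_def by (simp add: dist_norm)
    moreover have "\<bar>Dg v\<bar> \<le> M * norm v" by (rule deriv_bound[OF cvg S x Dg Lipg])
    ultimately have "eg \<le> 2 * M * norm v" unfolding eg_def by linarith
    also have "\<dots> \<le> 2 * M * r" using nv M0 by (intro mult_left_mono) auto
    finally show ?thesis unfolding bd_def using False by simp
  qed
  have "\<bar>f y - (f x + Df v)\<bar> \<le> eg + \<mu> / 2 * (norm v)\<^sup>2"
    unfolding eq using eg0 mu by (simp add: abs_le_iff)
  also have "\<dots> \<le> bd + \<mu> * r\<^sup>2 / 2"
  proof -
    have "(norm v)\<^sup>2 \<le> r\<^sup>2" using nv by (intro power_mono) auto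
    then have "\<mu> / 2 * (norm v)\<^sup>2 \<le> \<mu> * r\<^sup>2 / 2" using mu by (simp add: mult_left_mono)
    then show ?thesis using egb by linarith
  qed
  finally have main: "\<bar>f y - (f x + Df v)\<bar> \<le> bd + \<mu> * r\<^sup>2 / 2" .
  have bd0: "0 \<le> bd" using eg0 egb by linarith
  have "ennreal \<bar>f y - (f x + (if f differentiable (at x) then frechet_derivative f (at x) (y - x) else 0))\<bar>
      = ennreal \<bar>f y - (f x + Df v)\<bar>" using fdiff fr unfolding v_def by simp
  also have "\<dots> \<le> ennreal (bd + \<mu> * r\<^sup>2 / 2)" using main by (rule ennreal_leI)
  also have "\<dots> = ennreal bd + ennreal (\<mu> * r\<^sup>2 / 2)" using bd0 mu by (simp add: ennreal_plus)
  also have "\<dots> = ennreal (indicator (Aset S R) x * (\<Sum>i\<in>Basis. Gfun g R i x))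
       + ennreal (2 * M * r) * indicator (S - Aset S R) x + ennreal (\<mu> * r\<^sup>2 / 2) * indicator S x"
    unfolding bd_def using x by (auto simp: indicator_def)
  finally show ?thesis unfolding R_def .
qed


definition Cmain :: "nat \<Rightarrow> real" where
  "Cmain n = Kc n * (6 * real n ^ 3 + 8 * real n ^ 2 + 1)"

lemma Cmain_pos: "Cmain n > 0"
  unfolding Cmain_def using Kc_pos[of n] by (intro mult_pos_pos) (auto intro: add_nonneg_pos)

lemma diameter_pos_open:
  fixes S :: "'a::euclidean_space set"
  assumes "open S" "S \<noteq> {}" "bounded S"
  shows "diameter S > 0"
proof -
  obtain w where w: "w \<in> S" using assms by blast
  obtain \<rho> where \<rho>: "\<rho> > 0" "ball w \<rho> \<subseteq> S" using assms(1) w open_contains_ball by blast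
  obtain i :: 'a where i: "i \<in> Basis" using nonempty_Basis by blast
  have w': "w + (\<rho> / 2) *\<^sub>R i \<in> S" using \<rho> i by (intro subsetD[OF \<rho>(2)]) (simp add: dist_norm)
  have "dist w (w + (\<rho> / 2) *\<^sub>R i) \<le> diameter S" by (rule diameter_bounded_bound[OF assms(3) w w'])
  moreover have "dist w (w + (\<rho> / 2) *\<^sub>R i) = \<rho> / 2" using \<rho> i by (simp add: dist_norm)
  ultimately show ?thesis using \<rho> by simp
qed

lemma lip_g:
  fixes f :: "'a::euclidean_space \<Rightarrow> real"
  assumes mu: "\<mu> \<ge> 0" and Lf: "\<And>a b. a \<in> S \<Longrightarrow> b \<in> S \<Longrightarrow> \<bar>f a - f b\<bar> \<le> L * dist a b"
    and bnd: "\<mu> > 0 \<Longrightarrow> bounded S" and x0: "x0 \<in> S"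
    and a: "a \<in> S" and b: "b \<in> S"
  shows "\<bar>(f a + \<mu> / 2 * (norm (a - x0))\<^sup>2) - (f b + \<mu> / 2 * (norm (b - x0))\<^sup>2)\<bar> \<le> (L + \<mu> * diameter S) * dist a b"
proof (cases "\<mu> = 0")
  case True then show ?thesis using Lf[OF a b] by simp
next
  case False
  then have mpos: "\<mu> > 0" using mu by simp
  have bS: "bounded S" using bnd mpos by simp
  define D where "D = diameter S"
  have na: "norm (a - x0) \<le> D" unfolding D_def using diameter_bounded_bound[OF bS a x0] by (simp add: dist_norm)
  have nb: "norm (b - x0) \<le> D" unfolding D_def using diameter_bounded_bound[OF bS b x0] by (simp add: dist_norm)
  have "\<bar>(norm (a - x0))\<^sup>2 - (norm (b - x0))\<^sup>2\<bar> = \<bar>norm (a - x0) - norm (b - x0)\<bar> * (norm (a - x0) + norm (b - x0))"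
  proof -
    have "(norm (a - x0))\<^sup>2 - (norm (b - x0))\<^sup>2 = (norm (a - x0) - norm (b - x0)) * (norm (a - x0) + norm (b - x0))"
      by (simp add: power2_eq_square algebra_simps)
    then show ?thesis by (simp add: abs_mult)
  qed
  also have "\<dots> \<le> dist a b * (2 * D)"
  proof (rule mult_mono)
    have "\<bar>norm (a - x0) - norm (b - x0)\<bar> \<le> norm ((a - x0) - (b - x0))" by (rule norm_triangle_ineq3)
    then show "\<bar>norm (a - x0) - norm (b - x0)\<bar> \<le> dist a b" by (simp add: dist_norm)
    show "norm (a - x0) + norm (b - x0) \<le> 2 * D" using na nb by simp
  qed auto
  finally have sq: "\<bar>(norm (a - x0))\<^sup>2 - (norm (b - x0))\<^sup>2\<bar> \<le> dist a b * (2 * D)" .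
  have "\<bar>(f a + \<mu> / 2 * (norm (a - x0))\<^sup>2) - (f b + \<mu> / 2 * (norm (b - x0))\<^sup>2)\<bar>
      \<le> \<bar>f a - f b\<bar> + \<mu> / 2 * \<bar>(norm (a - x0))\<^sup>2 - (norm (b - x0))\<^sup>2\<bar>"
  proof -
    have e: "(f a + \<mu> / 2 * (norm (a - x0))\<^sup>2) - (f b + \<mu> / 2 * (norm (b - x0))\<^sup>2)
        = (f a - f b) + \<mu> / 2 * ((norm (a - x0))\<^sup>2 - (norm (b - x0))\<^sup>2)" by (simp add: algebra_simps)
    have "\<bar>\<mu> / 2 * ((norm (a - x0))\<^sup>2 - (norm (b - x0))\<^sup>2)\<bar> = \<mu> / 2 * \<bar>(norm (a - x0))\<^sup>2 - (norm (b - x0))\<^sup>2\<bar>"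
      using mu by (simp add: abs_mult)
    then show ?thesis unfolding e using abs_triangle_ineq by (metis add_left_mono order_trans)
  qed
  also have "\<dots> \<le> L * dist a b + \<mu> / 2 * (dist a b * (2 * D))"
    using Lf[OF a b] sq mu by (intro add_mono mult_left_mono) auto
  also have "\<dots> = (L + \<mu> * D) * dist a b" by (simp add: algebra_simps)
  finally show ?thesis unfolding D_def .
qed


lemma emH:
  assumes "0 \<le> a" "0 \<le> b"
  shows "ennreal a * (ennreal b * H) = ennreal (a * b) * H"
proof -
  have eq: "ennreal (a * b) = ennreal a * ennreal b" by (rule ennreal_mult) (use assms in auto)
  show ?thesis by (simp only: eq mult.assoc)
qed

lemma main_estimate:
  fixes S :: "'a::euclidean_space set" and f :: "'a \<Rightarrow> real"
  assumes S: "open S" "convex S" "S \<noteq> {}"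
    and noinv: "\<And>i. i \<in> Basis \<Longrightarrow> \<not> (\<forall>w\<in>S. \<forall>t. w + t *\<^sub>R i \<in> S)"
    and mu: "\<mu> \<ge> 0" and cvx: "convex_on S (\<lambda>x. f x + \<mu> * (norm x)\<^sup>2 / 2)"
    and L: "L \<ge> 0" and Lf: "\<And>a b. a \<in> S \<Longrightarrow> b \<in> S \<Longrightarrow> \<bar>f a - f b\<bar> \<le> L * dist a b"
    and bnd: "\<mu> > 0 \<Longrightarrow> bounded S" and r: "r > 0"
  shows "(\<integral>\<^sup>+ x \<in> S. (SUP y\<in>ball x r \<inter> S.
              ennreal \<bar>f y - (f x + (if f differentiable (at x)
                                        then frechet_derivative f (at x) (y - x) else 0))\<bar>) \<partial>lebesgue)
     \<le> ennreal (Cmain DIM('a) * r\<^sup>2 * (L + \<mu> * diameter S)) * hausdorff_measure (DIM('a) - 1) (frontier S)"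
proof -
  let ?H = "hausdorff_measure (DIM('a) - 1) (frontier S)"
  let ?F = "\<lambda>x. (SUP y\<in>ball x r \<inter> S.
              ennreal \<bar>f y - (f x + (if f differentiable (at x)
                                        then frechet_derivative f (at x) (y - x) else 0))\<bar>)"
  define d where "d = real DIM('a)"
  have d1: "d \<ge> 1" unfolding d_def using DIM_positive[where 'a='a] by linarith
  define M where "M = L + \<mu> * diameter S"
  define R where "R = d * r"
  have R: "R > 0" unfolding R_def using d1 r by simp
  obtain x0 where x0: "x0 \<in> S" using S(3) by blast
  define g where "g x = f x + \<mu> / 2 * (norm (x - x0))\<^sup>2" for x
  have fdef: "f y = g y - \<mu> / 2 * (norm (y - x0))\<^sup>2" for y by (simp add: g_def)
  have geq: "g = (\<lambda>x. (f x + \<mu> * (norm x)\<^sup>2 / 2) + (\<mu> * (norm x0)\<^sup>2 / 2 + x \<bullet> (- (\<mu> *\<^sub>R x0))))"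
  proof (rule ext)
    fix x
    have nid: "(norm (x - x0))\<^sup>2 = (norm x)\<^sup>2 - 2 * (x \<bullet> x0) + (norm x0)\<^sup>2"
      by (simp add: power2_norm_eq_inner inner_diff_left inner_diff_right inner_commute)
    show "g x = (f x + \<mu> * (norm x)\<^sup>2 / 2) + (\<mu> * (norm x0)\<^sup>2 / 2 + x \<bullet> (- (\<mu> *\<^sub>R x0)))"
      unfolding g_def nid by (simp add: algebra_simps)
  qed
  have cvg: "convex_on S g" unfolding geq
    by (rule convex_on_add[OF cvx convex_on_affine_inner[OF S(2)]])
  have DM: "\<mu> * diameter S \<ge> 0"
  proof (cases "\<mu> = 0")
    case False
    then have "bounded S" using bnd mu by simp
    then have "0 \<le> diameter S" by (rule diameter_ge_0)
    then show ?thesis using mu by simp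
  qed simp
  have M0: "M \<ge> 0" unfolding M_def using L DM by simp
  have Lipg: "\<bar>g a - g b\<bar> \<le> M * dist a b" if "a \<in> S" "b \<in> S" for a b
    unfolding g_def M_def by (rule lip_g[OF mu Lf bnd x0 that])
  interpret cvxlip g S M using cvg S(1) M0 Lipg by unfold_locales auto
  obtain N where N: "N \<in> null_sets lborel" and Nd: "\<And>x. x \<in> S - N \<Longrightarrow> g differentiable (at x)"
    using ae_diff by blast
  define A where "A = Aset S R"
  define \<psi> where "\<psi> x = (\<Sum>i\<in>Basis. ennreal (indicator A x * Gfun g R i x))
      + ennreal (2 * M * r) * indicator (S - A) x + ennreal (\<mu> * r\<^sup>2 / 2) * indicator S x" for x
  have Gnn: "0 \<le> indicator A x * Gfun g R i x" if "i \<in> Basis" for x i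
    using Gfun_nonneg[OF cvg R, of x i] that unfolding A_def Aset_def by (auto simp: indicator_def)
  have pw: "?F x * indicator S x \<le> \<psi> x" if x: "x \<notin> N" for x
  proof (cases "x \<in> S")
    case False then show ?thesis by simp
  next
    case True
    then obtain Dg where Dg: "(g has_derivative Dg) (at x)" using Nd x unfolding differentiable_def by blast
    have "?F x \<le> \<psi> x"
    proof (rule SUP_least)
      fix y assume y: "y \<in> ball x r \<inter> S"
      have "ennreal \<bar>f y - (f x + (if f differentiable (at x) then frechet_derivative f (at x) (y - x) else 0))\<bar>
          \<le> ennreal (indicator A x * (\<Sum>i\<in>Basis. Gfun g R i x))
            + ennreal (2 * M * r) * indicator (S - A) x + ennreal (\<mu> * r\<^sup>2 / 2) * indicator S x"
        unfolding A_def R_def d_def by (rule pointwise_bound[OF cvg S(1) M0 Lipg True Dg r mu fdef y])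
      also have "ennreal (indicator A x * (\<Sum>i\<in>Basis. Gfun g R i x)) = (\<Sum>i\<in>Basis. ennreal (indicator A x * Gfun g R i x))"
        using Gnn by (simp add: sum_distrib_left sum_ennreal)
      finally show "ennreal \<bar>f y - (f x + (if f differentiable (at x) then frechet_derivative f (at x) (y - x) else 0))\<bar> \<le> \<psi> x"
        unfolding \<psi>_def .
    qed
    then show ?thesis using True by simp
  qed
  have AE: "AE x in lborel. ?F x * indicator S x \<le> \<psi> x"
    by (rule AE_I'[OF N]) (use pw in auto)
  have Ab: "A \<in> sets borel" unfolding A_def using Aset_open[OF S(1)] by simp
  have Sb: "S \<in> sets borel" using S(1) by simp
  have Gm: "(\<lambda>x. ennreal (indicator A x * Gfun g R i x)) \<in> borel_measurable borel" if "i \<in> Basis" for i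
    unfolding A_def by (rule G_meas[OF cvg S(1) R that])
  have "(\<integral>\<^sup>+ x \<in> S. ?F x \<partial>lebesgue) = (\<integral>\<^sup>+ x. ?F x * indicator S x \<partial>lborel)"
    by (simp add: nn_integral_completion)
  also have "\<dots> \<le> (\<integral>\<^sup>+ x. \<psi> x \<partial>lborel)" by (rule nn_integral_mono_AE[OF AE])
  also have "\<dots> = (\<Sum>i\<in>Basis. \<integral>\<^sup>+ x. ennreal (indicator A x * Gfun g R i x) \<partial>lborel)
      + ennreal (2 * M * r) * emeasure lborel (S - A) + ennreal (\<mu> * r\<^sup>2 / 2) * emeasure lborel S"
  proof -
    have m1: "(\<lambda>x. \<Sum>i\<in>Basis. ennreal (indicator A x * Gfun g R i x)) \<in> borel_measurable borel"
      using Gm by (intro borel_measurable_sum) auto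
    have m2: "(\<lambda>x. ennreal (2 * M * r) * indicator (S - A) x) \<in> borel_measurable borel"
      using Ab Sb by measurable
    have m3: "(\<lambda>x. ennreal (\<mu> * r\<^sup>2 / 2) * indicator S x) \<in> borel_measurable borel"
      using Sb by measurable
    have "(\<integral>\<^sup>+ x. \<psi> x \<partial>lborel) = (\<integral>\<^sup>+ x. (\<Sum>i\<in>Basis. ennreal (indicator A x * Gfun g R i x))
        + ennreal (2 * M * r) * indicator (S - A) x \<partial>lborel) + (\<integral>\<^sup>+ x. ennreal (\<mu> * r\<^sup>2 / 2) * indicator S x \<partial>lborel)"
      unfolding \<psi>_def by (rule nn_integral_add) (use m1 m2 m3 in auto)
    also have "(\<integral>\<^sup>+ x. (\<Sum>i\<in>Basis. ennreal (indicator A x * Gfun g R i x))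
        + ennreal (2 * M * r) * indicator (S - A) x \<partial>lborel) = (\<integral>\<^sup>+ x. (\<Sum>i\<in>Basis. ennreal (indicator A x * Gfun g R i x)) \<partial>lborel)
        + (\<integral>\<^sup>+ x. ennreal (2 * M * r) * indicator (S - A) x \<partial>lborel)"
      by (rule nn_integral_add) (use m1 m2 in auto)
    also have "(\<integral>\<^sup>+ x. (\<Sum>i\<in>Basis. ennreal (indicator A x * Gfun g R i x)) \<partial>lborel)
        = (\<Sum>i\<in>Basis. \<integral>\<^sup>+ x. ennreal (indicator A x * Gfun g R i x) \<partial>lborel)"
      by (rule nn_integral_sum) (use Gm in auto)
    also have "(\<integral>\<^sup>+ x. ennreal (2 * M * r) * indicator (S - A) x \<partial>lborel) = ennreal (2 * M * r) * emeasure lborel (S - A)"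
      by (rule nn_integral_cmult_indicator) (use Ab Sb in auto)
    also have "(\<integral>\<^sup>+ x. ennreal (\<mu> * r\<^sup>2 / 2) * indicator S x \<partial>lborel) = ennreal (\<mu> * r\<^sup>2 / 2) * emeasure lborel S"
      by (rule nn_integral_cmult_indicator) (use Sb in auto)
    finally show ?thesis .
  qed
  also have "\<dots> \<le> ennreal (d * (6 * M * R * (Kc DIM('a) * R))) * ?H
      + ennreal (2 * M * r * (d * (2 * (Kc DIM('a) * (2 * R))))) * ?H
      + ennreal (\<mu> * r\<^sup>2 / 2 * (Kc DIM('a) * (2 * diameter S))) * ?H"
  proof (intro add_mono)
    have KR: "Kc DIM('a) * R \<ge> 0" using Kc_pos[of "DIM('a)"] R by simp
    have "(\<Sum>i\<in>Basis. \<integral>\<^sup>+ x. ennreal (indicator A x * Gfun g R i x) \<partial>lborel)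
        \<le> (\<Sum>i\<in>(Basis::'a set). ennreal (6 * M * R) * (ennreal (Kc DIM('a) * R) * ?H))"
      unfolding A_def by (intro sum_mono G_integral[OF cvg S(1) M0 Lipg R] noinv)
    also have "\<dots> = of_nat DIM('a) * (ennreal (6 * M * R * (Kc DIM('a) * R)) * ?H)"
      using M0 R KR by (simp add: ennreal_mult mult.assoc)
    also have "\<dots> = ennreal (d * (6 * M * R * (Kc DIM('a) * R))) * ?H"
      unfolding d_def using M0 R KR
      by (simp add: ennreal_mult ennreal_of_nat_eq_real_of_nat mult.assoc)
    finally show "(\<Sum>i\<in>Basis. \<integral>\<^sup>+ x. ennreal (indicator A x * Gfun g R i x) \<partial>lborel)
        \<le> ennreal (d * (6 * M * R * (Kc DIM('a) * R))) * ?H" .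
  next
    define W1 where "W1 i = {x\<in>S. x + (2 * R) *\<^sub>R i \<notin> S}" for i :: 'a
    define W2 where "W2 i = {x\<in>S. x + (2 * R) *\<^sub>R (- i) \<notin> S}" for i :: 'a
    have K2: "Kc DIM('a) * (2 * R) \<ge> 0" using Kc_pos[of "DIM('a)"] R by simp
    have W1b: "emeasure lborel (W1 i) \<le> ennreal (Kc DIM('a) * (2 * R)) * ?H" if i: "i \<in> Basis" for i
      unfolding W1_def by (rule layer_measure[OF S(1,2)]) (use i R noinv[OF i] in auto)
    have W2b: "emeasure lborel (W2 i) \<le> ennreal (Kc DIM('a) * (2 * R)) * ?H" if i: "i \<in> Basis" for i
    proof -
      have ni: "\<not> (\<forall>w\<in>S. \<forall>t. w + t *\<^sub>R (- i) \<in> S)"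
      proof
        assume h: "\<forall>w\<in>S. \<forall>t. w + t *\<^sub>R (- i) \<in> S"
        have "\<forall>w\<in>S. \<forall>t. w + t *\<^sub>R i \<in> S"
        proof (intro ballI allI)
          fix w t assume "w \<in> S"
          then have "w + (- t) *\<^sub>R (- i) \<in> S" using h by blast
          then show "w + t *\<^sub>R i \<in> S" by simp
        qed
        then show False using noinv[OF i] by blast
      qed
      show ?thesis unfolding W2_def by (rule layer_measure[OF S(1,2) _ _ ni]) (use i R in auto)
    qed
    have W1m: "W1 i \<in> sets lborel" for i
    proof -
      have "W1 i = S - ((\<lambda>x. x + (2 * R) *\<^sub>R i) -` S)" unfolding W1_def by auto
      moreover have "open ((\<lambda>x. x + (2 * R) *\<^sub>R i) -` S)"
        by (rule continuous_open_vimage[OF S(1)]) (intro continuous_intros)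
      ultimately show ?thesis using S(1) by auto
    qed
    have W2m: "W2 i \<in> sets lborel" for i
    proof -
      have "W2 i = S - ((\<lambda>x. x + (2 * R) *\<^sub>R (- i)) -` S)" unfolding W2_def by auto
      moreover have "open ((\<lambda>x. x + (2 * R) *\<^sub>R (- i)) -` S)"
        by (rule continuous_open_vimage[OF S(1)]) (intro continuous_intros)
      ultimately show ?thesis using S(1) by auto
    qed
    have sub: "S - A \<subseteq> (\<Union>i\<in>Basis. W1 i \<union> W2 i)"
      unfolding A_def Aset_def W1_def W2_def by auto
    have "emeasure lborel (S - A) \<le> emeasure lborel (\<Union>i\<in>Basis. W1 i \<union> W2 i)"
      using sub W1m W2m by (intro emeasure_mono) auto
    also have "\<dots> \<le> (\<Sum>i\<in>Basis. emeasure lborel (W1 i \<union> W2 i))"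
      using W1m W2m by (intro emeasure_subadditive_finite) auto
    also have "\<dots> \<le> (\<Sum>i\<in>(Basis::'a set). ennreal (Kc DIM('a) * (2 * R)) * ?H + ennreal (Kc DIM('a) * (2 * R)) * ?H)"
    proof (rule sum_mono)
      fix i :: 'a assume i: "i \<in> Basis"
      have "emeasure lborel (W1 i \<union> W2 i) \<le> emeasure lborel (W1 i) + emeasure lborel (W2 i)"
        using W1m W2m by (intro emeasure_subadditive) auto
      also have "\<dots> \<le> ennreal (Kc DIM('a) * (2 * R)) * ?H + ennreal (Kc DIM('a) * (2 * R)) * ?H"
        by (intro add_mono W1b W2b i)
      finally show "emeasure lborel (W1 i \<union> W2 i) \<le> ennreal (Kc DIM('a) * (2 * R)) * ?H + ennreal (Kc DIM('a) * (2 * R)) * ?H" .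
    qed
    also have "\<dots> = ennreal (d * (2 * (Kc DIM('a) * (2 * R)))) * ?H"
    proof -
      define k where "k = Kc DIM('a) * (2 * R)"
      have k: "k \<ge> 0" unfolding k_def using K2 .
      have s1: "(\<Sum>i\<in>(Basis::'a set). ennreal k * ?H + ennreal k * ?H) = of_nat DIM('a) * (ennreal k * ?H + ennreal k * ?H)"
        by simp
      have s2: "ennreal k * ?H + ennreal k * ?H = (ennreal k + ennreal k) * ?H" by (rule distrib_right[symmetric])
      have s3: "ennreal k + ennreal k = ennreal (2 * k)" using k by (simp add: ennreal_plus[symmetric] del: ennreal_plus)
      have s4: "(of_nat DIM('a) :: ennreal) = ennreal d" unfolding d_def by (simp add: ennreal_of_nat_eq_real_of_nat)
      have s5: "ennreal d * (ennreal (2 * k) * ?H) = ennreal (d * (2 * k)) * ?H"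
        using k d1 by (simp add: ennreal_mult mult.assoc)
      have t1: "(\<Sum>i\<in>(Basis::'a set). ennreal k * ?H + ennreal k * ?H) = (\<Sum>i\<in>(Basis::'a set). ennreal (2 * k) * ?H)"
        by (simp only: s2 s3)
      have t2: "(\<Sum>i\<in>(Basis::'a set). ennreal (2 * k) * ?H) = of_nat DIM('a) * (ennreal (2 * k) * ?H)" by simp
      show ?thesis unfolding k_def[symmetric] by (simp only: t1 t2 s4 s5)
    qed
    finally have SA: "emeasure lborel (S - A) \<le> ennreal (d * (2 * (Kc DIM('a) * (2 * R)))) * ?H" .
    have "ennreal (2 * M * r) * emeasure lborel (S - A) \<le> ennreal (2 * M * r) * (ennreal (d * (2 * (Kc DIM('a) * (2 * R)))) * ?H)"
      by (rule mult_left_mono[OF SA]) simp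
    also have "\<dots> = ennreal (2 * M * r * (d * (2 * (Kc DIM('a) * (2 * R))))) * ?H"
      by (rule emH) (use M0 r K2 d1 in auto)
    finally show "ennreal (2 * M * r) * emeasure lborel (S - A) \<le> ennreal (2 * M * r * (d * (2 * (Kc DIM('a) * (2 * R))))) * ?H" .
  next
    show "ennreal (\<mu> * r\<^sup>2 / 2) * emeasure lborel S \<le> ennreal (\<mu> * r\<^sup>2 / 2 * (Kc DIM('a) * (2 * diameter S))) * ?H"
    proof (cases "\<mu> = 0")
      case True then show ?thesis by simp
    next
      case False
      then have mpos: "\<mu> > 0" using mu by simp
      have bS: "bounded S" using bnd mpos by simp
      have Dp: "diameter S > 0" by (rule diameter_pos_open[OF S(1,3) bS])
      obtain i :: 'a where i: "i \<in> Basis" using nonempty_Basis by blast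
      have vb: "emeasure lborel S \<le> ennreal (Kc DIM('a) * (2 * diameter S)) * ?H"
        by (rule volume_bound[OF S(1,2) bS Dp i noinv[OF i]])
      have "ennreal (\<mu> * r\<^sup>2 / 2) * emeasure lborel S \<le> ennreal (\<mu> * r\<^sup>2 / 2) * (ennreal (Kc DIM('a) * (2 * diameter S)) * ?H)"
        by (rule mult_left_mono[OF vb]) simp
      also have "\<dots> = ennreal (\<mu> * r\<^sup>2 / 2 * (Kc DIM('a) * (2 * diameter S))) * ?H"
        by (rule emH) (use mu Dp Kc_pos[of "DIM('a)"] in auto)
      finally show ?thesis .
    qed
  qed
  also have "\<dots> = ennreal (d * (6 * M * R * (Kc DIM('a) * R)) + 2 * M * r * (d * (2 * (Kc DIM('a) * (2 * R))))
      + \<mu> * r\<^sup>2 / 2 * (Kc DIM('a) * (2 * diameter S))) * ?H"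
  proof -
    have K: "Kc DIM('a) > 0" by (rule Kc_pos)
    have n1: "0 \<le> d * (6 * M * R * (Kc DIM('a) * R))" using d1 M0 R K by simp
    have n2: "0 \<le> 2 * M * r * (d * (2 * (Kc DIM('a) * (2 * R))))" using d1 M0 R K r by simp
    have n3: "0 \<le> \<mu> * r\<^sup>2 / 2 * (Kc DIM('a) * (2 * diameter S))"
      using DM K by (simp add: mult.assoc mult.left_commute[of \<mu>])
    show ?thesis using n1 n2 n3
      by (simp add: distrib_right[symmetric] ennreal_plus[symmetric] del: ennreal_plus)
  qed
  also have "\<dots> \<le> ennreal (Cmain DIM('a) * r\<^sup>2 * M) * ?H"
  proof (rule mult_right_mono[OF ennreal_leI])
    have K: "Kc DIM('a) > 0" by (rule Kc_pos)
    have e1: "d * (6 * M * R * (Kc DIM('a) * R)) = Kc DIM('a) * r\<^sup>2 * M * (6 * d ^ 3)"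
      unfolding R_def by (simp add: power2_eq_square power3_eq_cube algebra_simps)
    have e2: "2 * M * r * (d * (2 * (Kc DIM('a) * (2 * R)))) = Kc DIM('a) * r\<^sup>2 * M * (8 * d ^ 2)"
      unfolding R_def by (simp add: power2_eq_square algebra_simps)
    have e3: "\<mu> * r\<^sup>2 / 2 * (Kc DIM('a) * (2 * diameter S)) = Kc DIM('a) * r\<^sup>2 * (\<mu> * diameter S)"
      by (simp add: algebra_simps)
    have "\<mu> * diameter S \<le> M" unfolding M_def using L by simp
    then have "Kc DIM('a) * r\<^sup>2 * (\<mu> * diameter S) \<le> Kc DIM('a) * r\<^sup>2 * M"
      using K by (intro mult_left_mono) auto
    then show "d * (6 * M * R * (Kc DIM('a) * R)) + 2 * M * r * (d * (2 * (Kc DIM('a) * (2 * R))))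
        + \<mu> * r\<^sup>2 / 2 * (Kc DIM('a) * (2 * diameter S)) \<le> Cmain DIM('a) * r\<^sup>2 * M"
    proof -
      have C: "Cmain DIM('a) = Kc DIM('a) * (6 * d ^ 3 + 8 * d ^ 2 + 1)" unfolding Cmain_def d_def ..
      have h: "Kc DIM('a) * r\<^sup>2 * (\<mu> * diameter S) \<le> Kc DIM('a) * r\<^sup>2 * M" by fact
      have "Kc DIM('a) * r\<^sup>2 * M * (6 * d ^ 3) + Kc DIM('a) * r\<^sup>2 * M * (8 * d ^ 2) + Kc DIM('a) * r\<^sup>2 * (\<mu> * diameter S)
          \<le> Kc DIM('a) * r\<^sup>2 * M * (6 * d ^ 3) + Kc DIM('a) * r\<^sup>2 * M * (8 * d ^ 2) + Kc DIM('a) * r\<^sup>2 * M"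
        using h by linarith
      also have "\<dots> = Kc DIM('a) * (6 * d ^ 3 + 8 * d ^ 2 + 1) * r\<^sup>2 * M" by (simp add: algebra_simps)
      finally show ?thesis unfolding e1 e2 e3 C .
    qed
  qed simp
  finally show ?thesis unfolding M_def .
qed


lemma lip_bound:
  assumes nt: "lip_const S f \<noteq> top" and a: "a \<in> S" and b: "b \<in> S"
  shows "\<bar>f a - f b\<bar> \<le> enn2real (lip_const S f) * dist a b"
proof (cases "a = b")
  case True then show ?thesis by simp
next
  case False
  have mem: "(a, b) \<in> {p. fst p \<in> S \<and> snd p \<in> S \<and> fst p \<noteq> snd p}" using a b False by simp
  have "ennreal (\<bar>f (fst (a, b)) - f (snd (a, b))\<bar> / dist (fst (a, b)) (snd (a, b))) \<le> lip_const S f"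
    unfolding lip_const_def by (rule SUP_upper[OF mem])
  then have "ennreal (\<bar>f a - f b\<bar> / dist a b) \<le> lip_const S f" by simp
  also have "\<dots> = ennreal (enn2real (lip_const S f))" using nt by (simp add: ennreal_enn2real_if)
  finally have "\<bar>f a - f b\<bar> / dist a b \<le> enn2real (lip_const S f)"
    by (simp add: ennreal_le_iff)
  then show ?thesis using False by (simp add: divide_le_eq mult.commute)
qed

lemma lip_zero:
  assumes z: "lip_const S f = 0" and a: "a \<in> S" and b: "b \<in> S"
  shows "f a = f b"
  using lip_bound[of S f a b] assms by simp

theorem lemma3p6:
  "\<exists>C::real. C \<ge> 0 \<and>
     (\<forall>(\<Omega>::'a::euclidean_space set) (f::'a \<Rightarrow> real) (lam::real) (r::real).
        open \<Omega> \<and> convex \<Omega> \<and> \<Omega> \<noteq> UNIV \<and> lam \<le> 0 \<and> lambda_convex_on lam \<Omega> f \<and> r > 0 \<longrightarrow>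
        (\<integral>\<^sup>+ x \<in> \<Omega>. (SUP y\<in>ball x r \<inter> \<Omega>.
              ennreal \<bar>f y - (f x + (if f differentiable (at x)
                                        then frechet_derivative f (at x) (y - x) else 0))\<bar>) \<partial>lebesgue)
        \<le> ennreal (C * r\<^sup>2) * hausdorff_measure (DIM('a) - 1) (frontier \<Omega>)
            * (lip_const \<Omega> f + ennreal \<bar>lam\<bar> * ediam \<Omega>))"
proof (intro exI[of _ "Cmain DIM('a)"] conjI allI impI)
  show "Cmain DIM('a) \<ge> 0" using Cmain_pos[of "DIM('a)"] by simp
  fix \<Omega> :: "'a set" and f :: "'a \<Rightarrow> real" and lam r :: real
  assume hyp: "open \<Omega> \<and> convex \<Omega> \<and> \<Omega> \<noteq> UNIV \<and> lam \<le> 0 \<and> lambda_convex_on lam \<Omega> f \<and> r > 0"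
  then have O: "open \<Omega>" "convex \<Omega>" "\<Omega> \<noteq> UNIV" and lam: "lam \<le> 0" and lc: "lambda_convex_on lam \<Omega> f"
    and r: "r > 0" by auto
  let ?H = "hausdorff_measure (DIM('a) - 1) (frontier \<Omega>)"
  let ?P = "lip_const \<Omega> f + ennreal \<bar>lam\<bar> * ediam \<Omega>"
  let ?F = "\<lambda>x. (SUP y\<in>ball x r \<inter> \<Omega>.
              ennreal \<bar>f y - (f x + (if f differentiable (at x)
                                        then frechet_derivative f (at x) (y - x) else 0))\<bar>)"
  define \<mu> where "\<mu> = - lam"
  have mu: "\<mu> \<ge> 0" unfolding \<mu>_def using lam by simp
  have absl: "\<bar>lam\<bar> = \<mu>" unfolding \<mu>_def using lam by simp
  have Cpos: "Cmain DIM('a) * r\<^sup>2 > 0" using Cmain_pos[of "DIM('a)"] r by simp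
  show "(\<integral>\<^sup>+ x \<in> \<Omega>. ?F x \<partial>lebesgue) \<le> ennreal (Cmain DIM('a) * r\<^sup>2) * ?H * ?P"
  proof (cases "\<Omega> = {}")
    case True then show ?thesis by simp
  next
    case ne: False
    have Hpos: "?H > 0" by (rule H_pos[OF O(1,2) ne O(3)])
    show ?thesis
    proof (cases "lip_const \<Omega> f = 0")
      case True
      have z: "?F x * indicator \<Omega> x = 0" for x
      proof (cases "x \<in> \<Omega>")
        case xO: True
        have fc: "f y = f x" if "y \<in> \<Omega>" for y using lip_zero[OF True that xO] .
        have fD: "(f has_derivative (\<lambda>_. 0)) (at x)"
          by (rule has_derivative_transform_within_open[OF has_derivative_const O(1) xO, of "f x"])
             (use fc in simp)
        have fdiff: "f differentiable (at x)" using fD by (rule differentiableI)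
        have fr: "frechet_derivative f (at x) = (\<lambda>_. 0)" using frechet_derivative_at[OF fD] by simp
        have "?F x \<le> 0" by (rule SUP_least) (use fc fdiff fr in auto)
        then show ?thesis by simp
      qed simp
      have "(\<integral>\<^sup>+ x \<in> \<Omega>. ?F x \<partial>lebesgue) = 0" by (simp only: z) simp
      then show ?thesis by simp
    next
      case lnz: False
      have Ppos: "?P > 0" using lnz by (simp add: zero_less_iff_neq_zero)
      show ?thesis
      proof (cases "?P = top \<or> ?H = top")
        case True
        have "ennreal (Cmain DIM('a) * r\<^sup>2) * ?H * ?P = top"
          using True Cpos Hpos Ppos by (auto simp: ennreal_mult_eq_top_iff)
        then show ?thesis by simp
      next
        case False
        then have Pt: "?P \<noteq> top" and Ht: "?H \<noteq> top" by auto
        have lt: "lip_const \<Omega> f \<noteq> top" using Pt by auto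
        define L where "L = enn2real (lip_const \<Omega> f)"
        have L0: "L \<ge> 0" unfolding L_def by simp
        have Le: "lip_const \<Omega> f = ennreal L" unfolding L_def using lt by (simp add: ennreal_enn2real_if)
        have Lf: "\<bar>f a - f b\<bar> \<le> L * dist a b" if "a \<in> \<Omega>" "b \<in> \<Omega>" for a b
          unfolding L_def by (rule lip_bound[OF lt that])
        have bnd: "bounded \<Omega>" if "\<mu> > 0"
        proof (rule ccontr)
          assume "\<not> bounded \<Omega>"
          then have "ediam \<Omega> = top" unfolding ediam_def by simp
          then have "ennreal \<bar>lam\<bar> * ediam \<Omega> = top" using that absl by (simp add: ennreal_mult_top)
          then show False using Pt by simp
        qed
        have noinv: "\<not> (\<forall>w\<in>\<Omega>. \<forall>t. w + t *\<^sub>R i \<in> \<Omega>)" if i: "i \<in> Basis" for i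
        proof
          assume "\<forall>w\<in>\<Omega>. \<forall>t. w + t *\<^sub>R i \<in> \<Omega>"
          then have "?H = top" using H_top[OF O(1,2) ne O(3) i] by blast
          then show False using Ht by simp
        qed
        have cvx: "convex_on \<Omega> (\<lambda>x. f x + \<mu> * (norm x)\<^sup>2 / 2)"
          using lc unfolding lambda_convex_on_def \<mu>_def by simp
        have est: "(\<integral>\<^sup>+ x \<in> \<Omega>. ?F x \<partial>lebesgue)
            \<le> ennreal (Cmain DIM('a) * r\<^sup>2 * (L + \<mu> * diameter \<Omega>)) * ?H"
          by (rule main_estimate[OF O(1,2) ne noinv mu cvx L0 Lf bnd r])
        have DM: "\<mu> * diameter \<Omega> \<ge> 0"
        proof (cases "\<mu> = 0")
          case False
          then have "bounded \<Omega>" using bnd mu by simp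
          then have "0 \<le> diameter \<Omega>" by (rule diameter_ge_0)
          then show ?thesis using mu by simp
        qed simp
        have Peq: "?P = ennreal (L + \<mu> * diameter \<Omega>)"
        proof (cases "\<mu> = 0")
          case True then show ?thesis unfolding absl Le by simp
        next
          case False
          then have b: "bounded \<Omega>" using bnd mu by simp
          then have "ediam \<Omega> = ennreal (diameter \<Omega>)" unfolding ediam_def by simp
          moreover have "0 \<le> diameter \<Omega>" using b by (rule diameter_ge_0)
          ultimately show ?thesis unfolding absl Le using mu L0
            by (simp add: ennreal_mult[symmetric] ennreal_plus[symmetric] del: ennreal_plus)
        qed
        have "ennreal (Cmain DIM('a) * r\<^sup>2 * (L + \<mu> * diameter \<Omega>)) * ?H
            = ennreal (Cmain DIM('a) * r\<^sup>2) * ?H * ?P"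
        proof -
          have "ennreal (Cmain DIM('a) * r\<^sup>2 * (L + \<mu> * diameter \<Omega>))
              = ennreal (Cmain DIM('a) * r\<^sup>2) * ennreal (L + \<mu> * diameter \<Omega>)"
            by (rule ennreal_mult) (use Cpos L0 DM in auto)
          then show ?thesis unfolding Peq by (simp add: ac_simps)
        qed
        then show ?thesis using est by simp
      qed
    qed
  qed
qed


end
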